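(* Fix $y\in\mathbb{R}^{n_y}$, $z\in\mathbb{R}^{n_z}$ and $\lambda\in\mathbb{R}^{n_z}$. Then there exists $\beta>0$ such that for every $t<0$ and every partition $P$ of $[t,0)$ into subintervals $[t_0,t_1),\dots,[t_{r-1},t_r)$ with $t_0=t<t_1<\dots<t_r=0$, $$\big|\tilde{V}^{P,+}_{z,\lambda}(t,y) - H(z,\lambda)\big| \le \frac{\beta}{|t|} \quad\text{and}\quad \big|\tilde{V}^{P,-}_{z,\lambda}(t,y) - H(z,\lambda)\big| \le \frac{\beta}{|t|}.$$
   Context: $\mathcal{U}\subset\mathbb{R}^{m_u}$, $\mathcal{D}\subset\mathbb{R}^{m_d}$ are nonempty compact sets. $f:\mathbb{R}^{n_z}\times\mathcal{U}\times\mathcal{D}\to\mathbb{R}^{n_z}$, $g:\mathbb{R}^{n_z}\times\mathcal{U}\times\mathcal{D}\to\mathbb{R}^{n_y}$, $A:\mathbb{R}^{n_z}\times\mathcal{U}\times\mathcal{D}\to\mathbb{R}^{n_y\times n_y}$, $M:\mathbb{R}^{n_z}\to\mathbb{R}^{n_z\times n_y}$ are continuous. Stability assumption: for the fixed $z$ there is a symmetric positive definite $P_0$ with $A(z,u,d)^\top P_0+P_0A(z,u,d)$ negative definite for all $u\in\mathcal{U}$, $d\in\mathcal{D}$. $F(z,u,d)=f(z,u,d)-M(z)g(z,u,d)$. Saddle-point assumption: $\min_{u\in\mathcal{U}}\max_{d\in\mathcal{D}}\lambda^\top F(z,u,d)=\max_{d\in\mathcal{D}}\min_{u\in\mathcal{U}}\lambda^\top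 F(z,u,d)=:H(z,\lambda)$ for all $z,\lambda$. $\mathbb{U}_{[a,b)}$ (resp. $\mathbb{D}_{[a,b)}$) is the set of measurable functions $[a,b)\to\mathcal{U}$ (resp. $\to\mathcal{D}$). Given $\mathbf{h}_j:[t_{j-1},t_j)\to\mathbb{R}^m$, $j=1,\dots,r$, $[\mathbf{h}_1,\dots,\mathbf{h}_r)$ denotes the function on $[t_0,t_r)$ equal to $\mathbf{h}_j$ on $[t_{j-1},t_j)$. For $t<0$, $\mathbf{u}\in\mathbb{U}_{[t,0)}$, $\mathbf{d}\in\mathbb{D}_{[t,0)}$, $\tilde{\mathbf{y}}^{z,\mathbf{u},\mathbf{d}}_{t,y}$ is the Carathéodory solution on $[t,0]$ of $\dot{\mathbf{y}}=g(z,\mathbf{u},\mathbf{d})+A(z,\mathbf{u},\mathbf{d})\mathbf{y}$, $\mathbf{y}(t)=y$, and $\tilde{J}^{z,\lambda}_{t,y}(\mathbf{u},\mathbf{d})=\frac{1}{|t|}\int_t^0\lambda^\top[f(z,\mathbf{u}(\tau),\mathbf{d}(\tau))+M(z)A(z,\mathbf{u}(\tau),\mathbf{d}(\tau))\tilde{\mathbf{y}}^{z,\mathbf{u},\mathbf{d}}_{t,y}(\tau)]\,d\tau$. With $\mathbb{U}_j=\mathbb{U}_{[t_{j-1},t_j)}$, $\mathbb{D}_j=\mathbb{D}_{[t_{j-1},t_j)}$, the upper and lower values are $$\tilde{V}^{P,+}_{z,\lambda}(t,y)=\inf_{\mathbf{u}_1\in\mathbb{U}_1}\sup_{\mathbf{d}_1\in\mathbb{D}_1}\cdots\inf_{\mathbf{u}_r\in\mathbb{U}_r}\sup_{\mathbf{d}_r\in\mathbb{D}_r}\tilde{J}^{z,\lambda}_{t,y}([\mathbf{u}_1,\dots,\mathbf{u}_r),[\mathbf{d}_1,\dots,\mathbf{d}_r)),$$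 $$\tilde{V}^{P,-}_{z,\lambda}(t,y)=\sup_{\mathbf{d}_1\in\mathbb{D}_1}\inf_{\mathbf{u}_1\in\mathbb{U}_1}\cdots\sup_{\mathbf{d}_r\in\mathbb{D}_r}\inf_{\mathbf{u}_r\in\mathbb{U}_r}\tilde{J}^{z,\lambda}_{t,y}([\mathbf{u}_1,\dots,\mathbf{u}_r),[\mathbf{d}_1,\dots,\mathbf{d}_r)).$$ *)

theory Defs
  imports "HOL-Analysis.Analysis"
begin

definition sym_posdef :: "real^'n^'n \<Rightarrow> bool" where
  "sym_posdef P \<longleftrightarrow> transpose P = P \<and> (\<forall>x. x \<noteq> 0 \<longrightarrow> x \<bullet> (P *v x) > 0)"

definition negdef :: "real^'n^'n \<Rightarrow> bool" where
  "negdef Q \<longleftrightarrow> (\<forall>x. x \<noteq> 0 \<longrightarrow> x \<bullet> (Q *v x) < 0)"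

text \<open>Measurable functions on [a,b) with values in S (values outside [a,b) are irrelevant).\<close>
definition admissible :: "'a::euclidean_space set \<Rightarrow> real \<Rightarrow> real \<Rightarrow> (real \<Rightarrow> 'a) set" where
  "admissible S a b = {u. (\<forall>\<tau>\<in>{a..<b}. u \<tau> \<in> S) \<and> u measurable_on {a..<b}}"

definition glue :: "real \<Rightarrow> real \<Rightarrow> (real \<Rightarrow> 'a) \<Rightarrow> (real \<Rightarrow> 'a) \<Rightarrow> real \<Rightarrow> 'a" where
  "glue a b h acc = (\<lambda>\<tau>. if \<tau> \<in> {a..<b} then h \<tau> else acc \<tau>)"

text \<open>Caratheodory solution on [t,0] of  y' = g(z,u,d) + A(z,u,d) y, y(t) = y0, in integral form.\<close>
definition is_car_sol ::
  "(real^'nz \<Rightarrow> real^'mu \<Rightarrow> real^'md \<Rightarrow> real^'ny) \<Rightarrow>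
   (real^'nz \<Rightarrow> real^'mu \<Rightarrow> real^'md \<Rightarrow> real^'ny^'ny) \<Rightarrow>
   real^'nz \<Rightarrow> (real \<Rightarrow> real^'mu) \<Rightarrow> (real \<Rightarrow> real^'md) \<Rightarrow> real \<Rightarrow> real^'ny \<Rightarrow>
   (real \<Rightarrow> real^'ny) \<Rightarrow> bool" where
  "is_car_sol g A z u d t y0 Y \<longleftrightarrow>
     (\<forall>\<tau>\<in>{t..0}. ((\<lambda>s. g z (u s) (d s) + A z (u s) (d s) *v Y s) has_integral (Y \<tau> - y0)) {t..\<tau>})"

definition ytil ::
  "(real^'nz \<Rightarrow> real^'mu \<Rightarrow> real^'md \<Rightarrow> real^'ny) \<Rightarrow>
   (real^'nz \<Rightarrow> real^'mu \<Rightarrow> real^'md \<Rightarrow> real^'ny^'ny) \<Rightarrow>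
   real^'nz \<Rightarrow> (real \<Rightarrow> real^'mu) \<Rightarrow> (real \<Rightarrow> real^'md) \<Rightarrow> real \<Rightarrow> real^'ny \<Rightarrow>
   real \<Rightarrow> real^'ny" where
  "ytil g A z u d t y0 = (THE Y. is_car_sol g A z u d t y0 Y \<and> (\<forall>\<tau>. \<tau> \<notin> {t..0} \<longrightarrow> Y \<tau> = 0))"

definition Jtil ::
  "(real^'nz \<Rightarrow> real^'mu \<Rightarrow> real^'md \<Rightarrow> real^'nz) \<Rightarrow>
   (real^'nz \<Rightarrow> real^'mu \<Rightarrow> real^'md \<Rightarrow> real^'ny) \<Rightarrow>
   (real^'nz \<Rightarrow> real^'mu \<Rightarrow> real^'md \<Rightarrow> real^'ny^'ny) \<Rightarrow>
   (real^'nz \<Rightarrow> real^'ny^'nz) \<Rightarrow>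
   real^'nz \<Rightarrow> real^'nz \<Rightarrow> real \<Rightarrow> real^'ny \<Rightarrow>
   (real \<Rightarrow> real^'mu) \<Rightarrow> (real \<Rightarrow> real^'md) \<Rightarrow> real" where
  "Jtil f g A M z lam t y0 u d =
     (1 / \<bar>t\<bar>) * integral {t..0}
        (\<lambda>\<tau>. lam \<bullet> (f z (u \<tau>) (d \<tau>) + M z *v (A z (u \<tau>) (d \<tau>) *v ytil g A z u d t y0 \<tau>)))"

text \<open>Partition  t = t_0 < t_1 < ... < t_r = 0, represented by the list [t_1,...,t_r].\<close>
definition is_partition :: "real \<Rightarrow> real list \<Rightarrow> bool" where
  "is_partition t ts \<longleftrightarrow> ts \<noteq> [] \<and> sorted_wrt (<) (t # ts) \<and> last ts = 0"

fun vplus :: "'a::euclidean_space set \<Rightarrow> 'b::euclidean_space set \<Rightarrow>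
    ((real \<Rightarrow> 'a) \<Rightarrow> (real \<Rightarrow> 'b) \<Rightarrow> real) \<Rightarrow> real \<Rightarrow> real list \<Rightarrow>
    (real \<Rightarrow> 'a) \<Rightarrow> (real \<Rightarrow> 'b) \<Rightarrow> real" where
  "vplus U D J a [] uacc dacc = J uacc dacc"
| "vplus U D J a (b # bs) uacc dacc =
     (INF u\<in>admissible U a b. SUP d\<in>admissible D a b.
        vplus U D J b bs (glue a b u uacc) (glue a b d dacc))"

fun vminus :: "'a::euclidean_space set \<Rightarrow> 'b::euclidean_space set \<Rightarrow>
    ((real \<Rightarrow> 'a) \<Rightarrow> (real \<Rightarrow> 'b) \<Rightarrow> real) \<Rightarrow> real \<Rightarrow> real list \<Rightarrow>
    (real \<Rightarrow> 'a) \<Rightarrow> (real \<Rightarrow> 'b) \<Rightarrow> real" where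
  "vminus U D J a [] uacc dacc = J uacc dacc"
| "vminus U D J a (b # bs) uacc dacc =
     (SUP d\<in>admissible D a b. INF u\<in>admissible U a b.
        vminus U D J b bs (glue a b u uacc) (glue a b d dacc))"

definition Vplus where
  "Vplus U D f g A M z lam ts t y0 =
     vplus U D (Jtil f g A M z lam t y0) t ts (\<lambda>_. undefined) (\<lambda>_. undefined)"

definition Vminus where
  "Vminus U D f g A M z lam ts t y0 =
     vminus U D (Jtil f g A M z lam t y0) t ts (\<lambda>_. undefined) (\<lambda>_. undefined)"

definition Fmap where
  "Fmap f g M z u d = f z u d - M z *v g z u d"

definition Ham where
  "Ham U D f g M z lam = (INF u\<in>U. SUP d\<in>D. lam \<bullet> Fmap f g M z u d)"

end

theory Submission
  imports Defs
begin

lemma mv_bound: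
  fixes A :: "real^'n^'m"
  shows "norm (A *v x) \<le> real CARD('m) * real CARD('n) * norm A * norm x"
proof -
  have "onorm ((*v) A) \<le> real CARD('m) * real CARD('n) * norm A"
  proof (rule onorm_le_matrix_component)
    fix i j
    have "\<bar>A $ i $ j\<bar> \<le> norm (A $ i)" by (rule component_le_norm_cart)
    also have "\<dots> \<le> norm A" by (rule Finite_Cartesian_Product.norm_nth_le)
    finally show "\<bar>A $ i $ j\<bar> \<le> norm A" .
  qed
  moreover have "norm (A *v x) \<le> onorm ((*v) A) * norm x"
    by (rule onorm) simp
  ultimately show ?thesis
    by (meson mult_right_mono norm_ge_zero order_trans)
qed

lemma bilinear_mv: "bilinear (\<lambda>(A::real^'n^'m) x. A *v x)"
  unfolding bilinear_def
proof (intro allI conjI)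
  fix A :: "real^'n^'m" and x :: "real^'n"
  show "linear (\<lambda>x. A *v x)" by simp
  show "linear (\<lambda>A. A *v x)"
    by (rule linearI) (simp_all add: matrix_vector_mult_add_rdistrib scaleR_matrix_vector_assoc)
qed

lemma bb_mv: "bounded_bilinear (\<lambda>(A::real^'n^'m) x. A *v x)"
  using bilinear_mv bilinear_conv_bounded_bilinear by blast

lemma continuous_on_mv[continuous_intros]:
  fixes F :: "'a::topological_space \<Rightarrow> real^'n^'m"
  shows "continuous_on S F \<Longrightarrow> continuous_on S G \<Longrightarrow> continuous_on S (\<lambda>x. F x *v G x)"
  using bounded_bilinear.continuous_on[OF bb_mv] by blast

lemma measurable_on_mv:
  fixes F :: "real \<Rightarrow> real^'n^'m"
  shows "F measurable_on S \<Longrightarrow> G measurable_on S \<Longrightarrow> (\<lambda>x. F x *v G x) measurable_on S"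
  using measurable_on_bilinear[OF bilinear_mv] by blast

lemma mb_integrable:
  fixes f :: "real \<Rightarrow> 'b::euclidean_space"
  assumes "f measurable_on {a..b}" "\<And>x. x \<in> {a..b} \<Longrightarrow> norm (f x) \<le> B"
  shows "f integrable_on {a..b}"
  by (rule measurable_bounded_by_integrable_imp_integrable[where g="\<lambda>_. B"])
     (use assms in \<open>auto simp: measurable_on_iff_borel_measurable\<close>)

lemma measurable_on_subset_lebesgue:
  fixes f :: "real \<Rightarrow> 'b::euclidean_space"
  assumes "f measurable_on S" "T \<subseteq> S" "T \<in> sets lebesgue"
  shows "f measurable_on T"
proof -
  have "(\<lambda>x. if x \<in> S then f x else 0) measurable_on UNIV"
    using assms measurable_on_UNIV by blast
  then have "(\<lambda>x. if x \<in> T then (if x \<in> S then f x else 0) else 0) measurable_on UNIV"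
    using measurable_on_restrict assms by blast
  moreover have "(\<lambda>x. if x \<in> T then (if x \<in> S then f x else 0) else 0) = (\<lambda>x. if x \<in> T then f x else 0)"
    using assms by (intro ext) auto
  ultimately show ?thesis using measurable_on_UNIV by metis
qed

lemma cont_measurable_on:
  fixes f :: "real \<Rightarrow> 'b::euclidean_space"
  shows "continuous_on {a..b} f \<Longrightarrow> f measurable_on {a..b}"
  by (simp add: continuous_imp_measurable_on_sets_lebesgue measurable_on_iff_borel_measurable)

lemma compose_measurable_on:
  fixes u :: "real \<Rightarrow> 'a::euclidean_space" and F :: "'a \<Rightarrow> 'c::euclidean_space"
  assumes u: "u measurable_on S" and S: "S \<in> sets lebesgue"
    and C: "closed C" and uC: "\<And>x. x \<in> S \<Longrightarrow> u x \<in> C" and F: "continuous_on C F"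
  shows "(\<lambda>x. F (u x)) measurable_on S"
proof -
  have "closedin (top_of_set UNIV) C" using C by simp
  then obtain G where G: "continuous_on UNIV G" "\<And>x. x \<in> C \<Longrightarrow> G x = F x"
    using Tietze_unbounded[OF F] by metis
  have "(\<lambda>x. if x \<in> S then u x else 0) measurable_on UNIV"
    using u measurable_on_UNIV by blast
  then have "(\<lambda>x. G (if x \<in> S then u x else 0)) measurable_on UNIV"
    using measurable_on_compose_continuous[OF _ G(1)] by (simp add: o_def)
  then have "(\<lambda>x. if x \<in> S then G (if x \<in> S then u x else 0) else 0) measurable_on UNIV"
    by (rule measurable_on_restrict[OF _ S])
  moreover have "(\<lambda>x. if x \<in> S then G (if x \<in> S then u x else 0) else 0) = (\<lambda>x. if x \<in> S then F (u x) else 0)"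
    using G uC by (intro ext) auto
  ultimately show ?thesis using measurable_on_UNIV by metis
qed


definition sol :: "(real \<Rightarrow> real^'n) \<Rightarrow> (real \<Rightarrow> real^'n^'n) \<Rightarrow> real \<Rightarrow> real^'n \<Rightarrow> (real \<Rightarrow> real^'n) \<Rightarrow> bool" where
  "sol b Am t y0 Y \<longleftrightarrow> (\<forall>\<tau>\<in>{t..0}. ((\<lambda>s. b s + Am s *v Y s) has_integral (Y \<tau> - y0)) {t..\<tau>})"

lemma pow_has_integral:
  assumes "t \<le> \<tau>"
  shows "((\<lambda>s. (s - t) ^ k) has_integral ((\<tau> - t) ^ Suc k / real (Suc k))) {t..\<tau>}"
proof -
  have "((\<lambda>s. (s - t) ^ Suc k / real (Suc k)) has_vector_derivative (s - t) ^ k) (at s within {t..\<tau>})" for s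
  proof -
    have "((\<lambda>s. (s - t) ^ Suc k) has_real_derivative real (Suc k) * (s - t) ^ k * 1) (at s within {t..\<tau>})"
    proof -
      have d1: "((\<lambda>s. s - t) has_real_derivative 1) (at s within {t..\<tau>})"
        by (auto intro!: derivative_eq_intros)
      from DERIV_power[OF d1, of "Suc k"] show ?thesis by simp
    qed
    then have "((\<lambda>s. (s - t) ^ Suc k / real (Suc k)) has_real_derivative real (Suc k) * (s - t) ^ k * 1 / real (Suc k)) (at s within {t..\<tau>})"
      by (rule DERIV_cdivide)
    then show ?thesis
      unfolding has_real_derivative_iff_has_vector_derivative[symmetric] by (simp del: of_nat_Suc)
  qed
  from fundamental_theorem_of_calculus[OF assms this]
  show ?thesis by simp
qed

lemma exp_terms_tendsto0: "(\<lambda>k. C * (x::real) ^ k / fact k) \<longlonglongrightarrow> 0"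
proof -
  have "summable (\<lambda>k. x ^ k /\<^sub>R fact k)" by (rule summable_exp_generic)
  then have "(\<lambda>k. x ^ k /\<^sub>R fact k) \<longlonglongrightarrow> 0" by (rule summable_LIMSEQ_zero)
  then have "(\<lambda>k. C * (x ^ k /\<^sub>R fact k)) \<longlonglongrightarrow> C * 0" by (intro tendsto_intros)
  moreover have "(\<lambda>k. C * (x ^ k /\<^sub>R fact k)) = (\<lambda>k. C * x ^ k / fact k)"
    by (rule ext) (simp add: field_simps)
  ultimately show ?thesis by simp
qed

locale lode =
  fixes b :: "real \<Rightarrow> real^'n" and Am :: "real \<Rightarrow> real^'n^'n" and t Kb KA :: real
  assumes t: "t < 0"
    and bm: "b measurable_on {t..0}" and Amm: "Am measurable_on {t..0}"
    and bb: "\<And>s. s \<in> {t..0} \<Longrightarrow> norm (b s) \<le> Kb"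
    and Ab: "\<And>s x. s \<in> {t..0} \<Longrightarrow> norm (Am s *v x) \<le> KA * norm x"
    and KA: "KA \<ge> 0" and Kb: "Kb \<ge> 0"
begin

lemma Am_int:
  assumes Z: "Z measurable_on {t..0}" and ZL: "\<And>s. s \<in> {t..0} \<Longrightarrow> norm (Z s) \<le> L"
    and ab: "{a..c} \<subseteq> {t..0}"
  shows "(\<lambda>s. Am s *v Z s) integrable_on {a..c}"
proof -
  have "(\<lambda>s. Am s *v Z s) integrable_on {t..0}"
  proof (rule mb_integrable)
    show "(\<lambda>s. Am s *v Z s) measurable_on {t..0}" by (rule measurable_on_mv[OF Amm Z])
    show "norm (Am s *v Z s) \<le> KA * L" if "s \<in> {t..0}" for s
      using Ab[OF that, of "Z s"] ZL[OF that] KA by (meson mult_left_mono order_trans)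
  qed
  then show ?thesis using integrable_on_subinterval ab by blast
qed

lemma h_int:
  assumes Z: "Z measurable_on {t..0}" and ZL: "\<And>s. s \<in> {t..0} \<Longrightarrow> norm (Z s) \<le> L"
    and ab: "{a..c} \<subseteq> {t..0}"
  shows "(\<lambda>s. b s + Am s *v Z s) integrable_on {a..c}"
proof -
  have "b integrable_on {t..0}" by (rule mb_integrable[OF bm bb])
  then have "b integrable_on {a..c}" using integrable_on_subinterval ab by blast
  then show ?thesis using Am_int[OF assms] by (rule integrable_add)
qed

lemma sol_props:
  assumes "sol b Am t y0 Y"
  shows "continuous_on {t..0} Y" "\<exists>L. \<forall>s\<in>{t..0}. norm (Y s) \<le> L"
    "\<And>s. s \<in> {t..0} \<Longrightarrow> Y s = y0 + integral {t..s} (\<lambda>s. b s + Am s *v Y s)"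
    "(\<lambda>s. b s + Am s *v Y s) integrable_on {t..0}"
    "Y t = y0"
proof -
  have hi: "((\<lambda>s. b s + Am s *v Y s) has_integral (Y s - y0)) {t..s}" if "s \<in> {t..0}" for s
    using assms that unfolding sol_def by blast
  show Yeq: "Y s = y0 + integral {t..s} (\<lambda>s. b s + Am s *v Y s)" if "s \<in> {t..0}" for s
    using integral_unique[OF hi[OF that]] by simp
  show int: "(\<lambda>s. b s + Am s *v Y s) integrable_on {t..0}"
    using hi[of 0] t by auto
  have "continuous_on {t..0} (\<lambda>s. y0 + integral {t..s} (\<lambda>s. b s + Am s *v Y s))"
    by (intro continuous_intros indefinite_integral_continuous_1 int)
  then show cY: "continuous_on {t..0} Y"
    by (rule continuous_on_eq) (simp add: Yeq)
  have "compact (Y ` {t..0})" by (rule compact_continuous_image[OF cY]) simp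
  then show "\<exists>L. \<forall>s\<in>{t..0}. norm (Y s) \<le> L"
    by (meson bounded_iff compact_imp_bounded imageI)
  show "Y t = y0" using Yeq[of t] t by simp
qed

lemma int_step:
  assumes \<tau>: "\<tau> \<in> {t..0}" and W: "W measurable_on {t..0}" and WL: "\<And>s. s \<in> {t..0} \<Longrightarrow> norm (W s) \<le> L"
    and Wk: "\<And>s. s \<in> {t..\<tau>} \<Longrightarrow> norm (W s) \<le> C * (KA * (s - t)) ^ k / fact k"
  shows "norm (integral {t..\<tau>} (\<lambda>s. Am s *v W s)) \<le> C * (KA * (\<tau> - t)) ^ Suc k / fact (Suc k)"
proof -
  have sub: "{t..\<tau>} \<subseteq> {t..0}" using \<tau> by auto
  have pint: "((\<lambda>s. (C * KA ^ Suc k / fact k) * (s - t) ^ k) has_integral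
      (C * KA ^ Suc k / fact k) * ((\<tau> - t) ^ Suc k / real (Suc k))) {t..\<tau>}"
    by (rule has_integral_mult_right[OF pow_has_integral]) (use \<tau> in auto)
  have "norm (integral {t..\<tau>} (\<lambda>s. Am s *v W s)) \<le> integral {t..\<tau>} (\<lambda>s. (C * KA ^ Suc k / fact k) * (s - t) ^ k)"
  proof (rule integral_norm_bound_integral)
    show "(\<lambda>s. Am s *v W s) integrable_on {t..\<tau>}" by (rule Am_int[OF W WL sub])
    show "(\<lambda>s. (C * KA ^ Suc k / fact k) * (s - t) ^ k) integrable_on {t..\<tau>}"
      using pint by blast
    show "norm (Am s *v W s) \<le> (C * KA ^ Suc k / fact k) * (s - t) ^ k" if "s \<in> {t..\<tau>}" for s
    proof -
      have "norm (Am s *v W s) \<le> KA * norm (W s)" using Ab that sub by blast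
      also have "\<dots> \<le> KA * (C * (KA * (s - t)) ^ k / fact k)"
        using Wk[OF that] KA by (rule mult_left_mono)
      also have "\<dots> = (C * KA ^ Suc k / fact k) * (s - t) ^ k"
        unfolding power_mult_distrib by (simp add: field_simps)
      finally show ?thesis .
    qed
  qed
  also have "\<dots> = (C * KA ^ Suc k / fact k) * ((\<tau> - t) ^ Suc k / real (Suc k))"
    using pint by (rule integral_unique)
  also have "\<dots> = C * (KA * (\<tau> - t)) ^ Suc k / fact (Suc k)"
    unfolding power_mult_distrib fact_Suc by (simp add: field_simps del: of_nat_Suc)
  finally show ?thesis .
qed

end


lemma cont_bounded:
  fixes f :: "real \<Rightarrow> 'a::real_normed_vector"
  assumes "continuous_on {a..c} f"
  shows "\<exists>L. \<forall>s\<in>{a..c}. norm (f s) \<le> L"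
proof -
  have "compact (f ` {a..c})" by (rule compact_continuous_image[OF assms]) simp
  then show ?thesis by (meson bounded_iff compact_imp_bounded imageI)
qed

primrec pic :: "(real \<Rightarrow> real^'n) \<Rightarrow> (real \<Rightarrow> real^'n^'n) \<Rightarrow> real \<Rightarrow> real^'n \<Rightarrow> nat \<Rightarrow> real \<Rightarrow> real^'n" where
  "pic b Am t y0 0 = (\<lambda>\<tau>. y0)"
| "pic b Am t y0 (Suc k) = (\<lambda>\<tau>. y0 + integral {t..\<tau>} (\<lambda>s. b s + Am s *v pic b Am t y0 k s))"

context lode
begin

lemma sol_unique:
  assumes s1: "sol b Am t y0 Y1" and s2: "sol b Am t y0 Y2" and \<tau>0: "\<tau>0 \<in> {t..0}"
  shows "Y1 \<tau>0 = Y2 \<tau>0"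
proof -
  define W where "W = (\<lambda>s. Y1 s - Y2 s)"
  have WI: "((\<lambda>s. Am s *v W s) has_integral W \<tau>) {t..\<tau>}" if "\<tau> \<in> {t..0}" for \<tau>
  proof -
    have "((\<lambda>s. (b s + Am s *v Y1 s) - (b s + Am s *v Y2 s)) has_integral ((Y1 \<tau> - y0) - (Y2 \<tau> - y0))) {t..\<tau>}"
      using s1 s2 that unfolding sol_def by (intro has_integral_diff) auto
    then show ?thesis by (simp add: W_def matrix_vector_mult_diff_distrib)
  qed
  have cW: "continuous_on {t..0} W"
    unfolding W_def using sol_props(1)[OF s1] sol_props(1)[OF s2] by (intro continuous_intros)
  then have Wm: "W measurable_on {t..0}" by (rule cont_measurable_on)
  obtain L where L: "\<And>s. s \<in> {t..0} \<Longrightarrow> norm (W s) \<le> L" using cont_bounded[OF cW] by blast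
  have bnd: "\<forall>\<tau>\<in>{t..0}. norm (W \<tau>) \<le> L * (KA * (\<tau> - t)) ^ k / fact k" for k
  proof (induction k)
    case 0
    then show ?case using L by simp
  next
    case (Suc k)
    show ?case
    proof
      fix \<tau> assume \<tau>: "\<tau> \<in> {t..0}"
      have "W \<tau> = integral {t..\<tau>} (\<lambda>s. Am s *v W s)" using WI[OF \<tau>] by (simp add: integral_unique)
      also have "norm \<dots> \<le> L * (KA * (\<tau> - t)) ^ Suc k / fact (Suc k)"
        by (rule int_step[OF \<tau> Wm L]) (use Suc \<tau> in auto)
      finally show "norm (W \<tau>) \<le> L * (KA * (\<tau> - t)) ^ Suc k / fact (Suc k)" .
    qed
  qed
  have "norm (W \<tau>0) \<le> 0"
    by (rule LIMSEQ_le_const[OF exp_terms_tendsto0[of L "KA * (\<tau>0 - t)"]]) (use bnd \<tau>0 in auto)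
  then show ?thesis by (simp add: W_def)
qed

lemma pic_cont: "continuous_on {t..0} (pic b Am t y0 k)"
proof (induction k)
  case 0
  then show ?case by simp
next
  case (Suc k)
  obtain L where L: "\<And>s. s \<in> {t..0} \<Longrightarrow> norm (pic b Am t y0 k s) \<le> L"
    using cont_bounded[OF Suc] by blast
  have "(\<lambda>s. b s + Am s *v pic b Am t y0 k s) integrable_on {t..0}"
    by (rule h_int[OF cont_measurable_on[OF Suc] L]) auto
  then show ?case by (simp, intro continuous_intros indefinite_integral_continuous_1)
qed

lemma pic_diff:
  "\<forall>\<tau>\<in>{t..0}. norm (pic b Am t y0 (Suc k) \<tau> - pic b Am t y0 k \<tau>)
     \<le> ((Kb + KA * norm y0) * (- t)) * (KA * (\<tau> - t)) ^ k / fact k"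
proof (induction k)
  case 0
  show ?case
  proof
    fix \<tau> assume \<tau>: "\<tau> \<in> {t..0}"
    have "norm (integral {t..\<tau>} (\<lambda>s. b s + Am s *v y0)) \<le> integral {t..\<tau>} (\<lambda>s. Kb + KA * norm y0)"
    proof (rule integral_norm_bound_integral)
      show "(\<lambda>s. b s + Am s *v y0) integrable_on {t..\<tau>}"
        using h_int[of "\<lambda>_. y0" "norm y0"] \<tau> by auto
      show "norm (b s + Am s *v y0) \<le> Kb + KA * norm y0" if "s \<in> {t..\<tau>}" for s
        using bb[of s] Ab[of s y0] that \<tau> norm_triangle_ineq[of "b s" "Am s *v y0"] by auto
    qed auto
    also have "\<dots> = (\<tau> - t) * (Kb + KA * norm y0)" using \<tau> by simp
    also have "\<dots> \<le> (- t) * (Kb + KA * norm y0)"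
      using \<tau> KA Kb by (intro mult_right_mono) auto
    finally show "norm (pic b Am t y0 (Suc 0) \<tau> - pic b Am t y0 0 \<tau>)
       \<le> ((Kb + KA * norm y0) * (- t)) * (KA * (\<tau> - t)) ^ 0 / fact 0"
      by (simp add: mult.commute)
  qed
next
  case (Suc k)
  show ?case
  proof
    fix \<tau> assume \<tau>: "\<tau> \<in> {t..0}"
    define W where "W = (\<lambda>s. pic b Am t y0 (Suc k) s - pic b Am t y0 k s)"
    have cW: "continuous_on {t..0} W" unfolding W_def using pic_cont by (intro continuous_intros)
    obtain L where L: "\<And>s. s \<in> {t..0} \<Longrightarrow> norm (W s) \<le> L" using cont_bounded[OF cW] by blast
    obtain L1 where L1: "\<And>s. s \<in> {t..0} \<Longrightarrow> norm (pic b Am t y0 (Suc k) s) \<le> L1"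
      using cont_bounded[OF pic_cont] by blast
    obtain L2 where L2: "\<And>s. s \<in> {t..0} \<Longrightarrow> norm (pic b Am t y0 k s) \<le> L2"
      using cont_bounded[OF pic_cont] by blast
    have "pic b Am t y0 (Suc (Suc k)) \<tau> - pic b Am t y0 (Suc k) \<tau>
        = integral {t..\<tau>} (\<lambda>s. b s + Am s *v pic b Am t y0 (Suc k) s)
          - integral {t..\<tau>} (\<lambda>s. b s + Am s *v pic b Am t y0 k s)"
      by simp
    also have "\<dots> = integral {t..\<tau>} (\<lambda>s. (b s + Am s *v pic b Am t y0 (Suc k) s) - (b s + Am s *v pic b Am t y0 k s))"
      by (rule integral_diff[symmetric];
          rule h_int[OF cont_measurable_on[OF pic_cont]]; (use L1 L2 \<tau> in auto)?)
    also have "\<dots> = integral {t..\<tau>} (\<lambda>s. Am s *v W s)"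
      by (simp add: W_def matrix_vector_mult_diff_distrib)
    finally have eq: "pic b Am t y0 (Suc (Suc k)) \<tau> - pic b Am t y0 (Suc k) \<tau> = integral {t..\<tau>} (\<lambda>s. Am s *v W s)" .
    show "norm (pic b Am t y0 (Suc (Suc k)) \<tau> - pic b Am t y0 (Suc k) \<tau>)
        \<le> ((Kb + KA * norm y0) * (- t)) * (KA * (\<tau> - t)) ^ Suc k / fact (Suc k)"
      unfolding eq
      by (rule int_step[OF \<tau> cont_measurable_on[OF cW] L]) (use Suc \<tau> in \<open>auto simp: W_def\<close>)
  qed
qed

end


context lode
begin

lemma sol_exists: "\<exists>Y. sol b Am t y0 Y"
proof -
  define C0 where "C0 = (Kb + KA * norm y0) * (- t)"
  define x where "x = KA * (- t)"
  have C0: "C0 \<ge> 0" unfolding C0_def using KA Kb t by (intro mult_nonneg_nonneg add_nonneg_nonneg) auto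
  have x0: "x \<ge> 0" unfolding x_def using KA t by (intro mult_nonneg_nonneg) auto
  define e where "e = (\<lambda>j. C0 * x ^ j / fact j)"
  have e_sum: "summable e"
  proof -
    have "summable (\<lambda>j. C0 * (x ^ j /\<^sub>R fact j))"
      by (rule summable_mult[OF summable_exp_generic])
    moreover have "(\<lambda>j. C0 * (x ^ j /\<^sub>R fact j)) = e"
      by (rule ext) (simp add: e_def field_simps)
    ultimately show ?thesis by (simp only:)
  qed
  have e_ge: "e j \<ge> 0" for j using C0 x0 by (simp add: e_def)
  define D where "D = (\<lambda>\<tau> j. pic b Am t y0 (Suc j) \<tau> - pic b Am t y0 j \<tau>)"
  have dle: "norm (D \<tau> j) \<le> e j" if \<tau>: "\<tau> \<in> {t..0}" for \<tau> j
  proof -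
    have "norm (D \<tau> j) \<le> C0 * (KA * (\<tau> - t)) ^ j / fact j"
      using pic_diff[of y0 j] \<tau> by (simp add: D_def C0_def)
    also have "\<dots> \<le> e j"
      unfolding e_def x_def
      using \<tau> KA C0 by (intro divide_right_mono mult_left_mono power_mono mult_left_mono) auto
    finally show ?thesis .
  qed
  have summ: "summable (D \<tau>)" if "\<tau> \<in> {t..0}" for \<tau>
    by (rule summable_comparison_test[OF _ e_sum]) (use dle that in auto)
  define Y where "Y = (\<lambda>\<tau>. y0 + suminf (D \<tau>))"
  have picsum: "pic b Am t y0 k \<tau> = y0 + sum (D \<tau>) {..<k}" for k \<tau>
    unfolding D_def by (subst sum_lessThan_telescope[where f="\<lambda>j. pic b Am t y0 j \<tau>"]) simp
  define T where "T = (\<lambda>k. suminf e - sum e {..<k})"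
  have T0: "T \<longlonglongrightarrow> 0"
  proof -
    have "(\<lambda>k. suminf e - sum e {..<k}) \<longlonglongrightarrow> suminf e - suminf e"
      by (intro tendsto_intros summable_LIMSEQ e_sum)
    then show ?thesis by (simp add: T_def)
  qed
  have Teq: "T k = (\<Sum>n. e (n + k))" for k
    using suminf_split_initial_segment[OF e_sum, of k] by (simp add: T_def)
  have Tge: "T k \<ge> 0" for k
    unfolding Teq using e_ge by (intro suminf_nonneg summable_ignore_initial_segment e_sum) auto
  have Tb: "norm (Y \<tau> - pic b Am t y0 k \<tau>) \<le> T k" if \<tau>: "\<tau> \<in> {t..0}" for \<tau> k
  proof -
    have "Y \<tau> - pic b Am t y0 k \<tau> = suminf (D \<tau>) - sum (D \<tau>) {..<k}"
      by (simp add: Y_def picsum)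
    also have "\<dots> = (\<Sum>n. D \<tau> (n + k))"
      using suminf_split_initial_segment[OF summ[OF \<tau>], of k] by simp
    finally have eq: "Y \<tau> - pic b Am t y0 k \<tau> = (\<Sum>n. D \<tau> (n + k))" .
    show ?thesis unfolding eq Teq
      by (rule norm_suminf_le) (use dle[OF \<tau>] summable_ignore_initial_segment[OF e_sum] in auto)
  qed
  have Yconv: "(\<lambda>k. pic b Am t y0 k \<tau>) \<longlonglongrightarrow> Y \<tau>" if \<tau>: "\<tau> \<in> {t..0}" for \<tau>
    unfolding picsum Y_def by (intro tendsto_intros summable_LIMSEQ summ[OF \<tau>])
  have Ym: "Y measurable_on {t..0}"
    by (rule measurable_on_limit[where f="\<lambda>k. pic b Am t y0 k" and N="{}"])
       (use cont_measurable_on[OF pic_cont] Yconv in auto)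
  have YL: "norm (Y s) \<le> norm y0 + T 0" if s: "s \<in> {t..0}" for s
  proof -
    have "norm (Y s) \<le> norm (pic b Am t y0 0 s) + norm (Y s - pic b Am t y0 0 s)"
      by (rule norm_triangle_sub)
    then show ?thesis using Tb[OF s, of 0] by simp
  qed
  have "sol b Am t y0 Y"
    unfolding sol_def
  proof
    fix \<tau> assume \<tau>: "\<tau> \<in> {t..0}"
    have sub: "{t..\<tau>} \<subseteq> {t..0}" using \<tau> by auto
    have hi: "(\<lambda>s. b s + Am s *v Y s) integrable_on {t..\<tau>}"
      by (rule h_int[OF Ym YL sub])
    define I where "I = integral {t..\<tau>} (\<lambda>s. b s + Am s *v Y s)"
    have est: "norm (I - (Y \<tau> - y0)) \<le> KA * T k * (- t) + T (Suc k)" for k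
    proof -
      obtain L where L: "\<And>s. s \<in> {t..0} \<Longrightarrow> norm (pic b Am t y0 k s) \<le> L"
        using cont_bounded[OF pic_cont] by blast
      have hk: "(\<lambda>s. b s + Am s *v pic b Am t y0 k s) integrable_on {t..\<tau>}"
        by (rule h_int[OF cont_measurable_on[OF pic_cont] L sub])
      have "I - integral {t..\<tau>} (\<lambda>s. b s + Am s *v pic b Am t y0 k s)
          = integral {t..\<tau>} (\<lambda>s. (b s + Am s *v Y s) - (b s + Am s *v pic b Am t y0 k s))"
        unfolding I_def by (rule integral_diff[symmetric, OF hi hk])
      also have "\<dots> = integral {t..\<tau>} (\<lambda>s. Am s *v (Y s - pic b Am t y0 k s))"
        by (simp add: matrix_vector_mult_diff_distrib)
      finally have eq1: "I - integral {t..\<tau>} (\<lambda>s. b s + Am s *v pic b Am t y0 k s)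
          = integral {t..\<tau>} (\<lambda>s. Am s *v (Y s - pic b Am t y0 k s))" .
      have "norm (integral {t..\<tau>} (\<lambda>s. Am s *v (Y s - pic b Am t y0 k s))) \<le> integral {t..\<tau>} (\<lambda>s. KA * T k)"
      proof (rule integral_norm_bound_integral)
        have "(\<lambda>s. Y s - pic b Am t y0 k s) measurable_on {t..0}"
          by (rule measurable_on_diff[OF Ym cont_measurable_on[OF pic_cont]])
        moreover have "norm (Y s - pic b Am t y0 k s) \<le> T k" if "s \<in> {t..0}" for s
          using Tb that by blast
        ultimately show "(\<lambda>s. Am s *v (Y s - pic b Am t y0 k s)) integrable_on {t..\<tau>}"
          using Am_int sub by blast
        show "norm (Am s *v (Y s - pic b Am t y0 k s)) \<le> KA * T k" if "s \<in> {t..\<tau>}" for s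
        proof -
          have "norm (Am s *v (Y s - pic b Am t y0 k s)) \<le> KA * norm (Y s - pic b Am t y0 k s)"
            using Ab that sub by blast
          also have "\<dots> \<le> KA * T k" using Tb[of s k] that sub KA by (intro mult_left_mono) auto
          finally show ?thesis .
        qed
      qed auto
      also have "\<dots> = (\<tau> - t) * (KA * T k)" using \<tau> by simp
      also have "\<dots> \<le> (- t) * (KA * T k)"
        using \<tau> KA Tge[of k] by (intro mult_right_mono) auto
      finally have n1: "norm (I - integral {t..\<tau>} (\<lambda>s. b s + Am s *v pic b Am t y0 k s)) \<le> KA * T k * (- t)"
        unfolding eq1 by (simp add: mult_ac)
      have "I - (Y \<tau> - y0) = (I - integral {t..\<tau>} (\<lambda>s. b s + Am s *v pic b Am t y0 k s))
          + (pic b Am t y0 (Suc k) \<tau> - Y \<tau>)"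
        by simp
      also have "norm \<dots> \<le> KA * T k * (- t) + T (Suc k)"
        using n1 Tb[OF \<tau>, of "Suc k"] norm_triangle_le norm_minus_commute
        by (smt (verit, ccfv_SIG) norm_triangle_ineq)
      finally show ?thesis .
    qed
    have lim: "(\<lambda>k. KA * T k * (- t) + T (Suc k)) \<longlonglongrightarrow> KA * 0 * (- t) + 0"
      by (intro tendsto_intros T0 LIMSEQ_Suc)
    have "norm (I - (Y \<tau> - y0)) \<le> KA * 0 * (- t) + 0"
      by (rule LIMSEQ_le_const[OF lim]) (use est in blast)
    then have "I = Y \<tau> - y0" by simp
    then show "((\<lambda>s. b s + Am s *v Y s) has_integral (Y \<tau> - y0)) {t..\<tau>}"
      using integrable_integral[OF hi] by (simp add: I_def)
  qed
  then show ?thesis by blast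
qed

lemma sol_exists0: "\<exists>Y. sol b Am t y0 Y \<and> (\<forall>\<tau>. \<tau> \<notin> {t..0} \<longrightarrow> Y \<tau> = 0)"
proof -
  obtain Y where Y: "sol b Am t y0 Y" using sol_exists by blast
  define Y' where "Y' = (\<lambda>\<tau>. if \<tau> \<in> {t..0} then Y \<tau> else 0)"
  have "sol b Am t y0 Y'"
    unfolding sol_def
  proof
    fix \<tau> assume \<tau>: "\<tau> \<in> {t..0}"
    have "((\<lambda>s. b s + Am s *v Y s) has_integral (Y \<tau> - y0)) {t..\<tau>}"
      using Y \<tau> unfolding sol_def by blast
    moreover have "((\<lambda>s. b s + Am s *v Y' s) has_integral (Y \<tau> - y0)) {t..\<tau>} \<longleftrightarrow>
        ((\<lambda>s. b s + Am s *v Y s) has_integral (Y \<tau> - y0)) {t..\<tau>}"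
      by (rule has_integral_cong) (use \<tau> in \<open>auto simp: Y'_def\<close>)
    ultimately show "((\<lambda>s. b s + Am s *v Y' s) has_integral (Y' \<tau> - y0)) {t..\<tau>}"
      using \<tau> by (simp add: Y'_def)
  qed
  then show ?thesis by (auto simp: Y'_def)
qed

end


locale lyap = lode +
  fixes P :: "real^'n^'n" and c pP :: real
  assumes Psym: "\<And>x y. x \<bullet> (P *v y) = y \<bullet> (P *v x)"
    and diss: "\<And>s x. s \<in> {t..0} \<Longrightarrow> x \<bullet> (P *v (Am s *v x)) \<le> - c * (norm x)\<^sup>2"
    and c: "c > 0"
    and Pb: "\<And>x y. \<bar>x \<bullet> (P *v y)\<bar> \<le> pP * norm x * norm y"
    and pP: "pP > 0"
begin

lemma V_expand: "(x + d) \<bullet> (P *v (x + d)) = x \<bullet> (P *v x) + 2 * (x \<bullet> (P *v d)) + d \<bullet> (P *v d)"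
  using Psym[of d x] by (simp add: matrix_vector_right_distrib inner_add_left inner_add_right)

lemma step_bound:
  assumes Y: "sol b Am t y0 Y" and L: "\<And>s. s \<in> {t..0} \<Longrightarrow> norm (Y s) \<le> L" and L0: "L \<ge> 0"
    and s: "t \<le> s" and d: "0 \<le> \<delta>" and sd: "s + \<delta> \<le> 0"
  shows "Y (s + \<delta>) \<bullet> (P *v Y (s + \<delta>)) \<le>
     Y s \<bullet> (P *v Y s) * (1 - (c / pP) * \<delta>) + ((pP * Kb)\<^sup>2 / c) * \<delta>
     + (2 * pP * L * KA * (Kb + KA * L) + pP * (Kb + KA * L)\<^sup>2) * \<delta>\<^sup>2"
proof -
  define h where "h = (\<lambda>s. b s + Am s *v Y s)"
  define \<Lambda> where "\<Lambda> = Kb + KA * L"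
  have \<Lambda>0: "\<Lambda> \<ge> 0" unfolding \<Lambda>_def using Kb KA L0 by simp
  have hn: "norm (h r) \<le> \<Lambda>" if "r \<in> {t..0}" for r
  proof -
    have "norm (h r) \<le> norm (b r) + norm (Am r *v Y r)" unfolding h_def by (rule norm_triangle_ineq)
    also have "\<dots> \<le> Kb + KA * norm (Y r)" using bb[OF that] Ab[OF that] by (intro add_mono) auto
    also have "\<dots> \<le> \<Lambda>" unfolding \<Lambda>_def using L[OF that] KA by (intro add_left_mono mult_left_mono) auto
    finally show ?thesis .
  qed
  have hint: "h integrable_on {t..0}" unfolding h_def by (rule sol_props(4)[OF Y])
  have Ydiff: "Y r - Y q = integral {q..r} h" if "t \<le> q" "q \<le> r" "r \<le> 0" for q r
  proof -
    have "h integrable_on {t..r}" using hint integrable_on_subinterval that by fastforce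
    then have "integral {t..q} h + integral {q..r} h = integral {t..r} h"
      using that by (intro Henstock_Kurzweil_Integration.integral_combine) auto
    moreover have "Y r = y0 + integral {t..r} h" "Y q = y0 + integral {t..q} h"
      using sol_props(3)[OF Y] that unfolding h_def by auto
    ultimately show ?thesis by (simp add: algebra_simps)
  qed
  have Lip: "norm (Y r - Y q) \<le> \<Lambda> * (r - q)" if "t \<le> q" "q \<le> r" "r \<le> 0" for q r
  proof -
    have "norm (integral {q..r} h) \<le> integral {q..r} (\<lambda>_. \<Lambda>)"
      by (rule integral_norm_bound_integral)
         (use hint integrable_on_subinterval that hn in \<open>fastforce+\<close>)
    then show ?thesis using Ydiff[OF that] that by (simp add: mult.commute)
  qed
  define x where "x = Y s"
  define \<Delta> where "\<Delta> = Y (s + \<delta>) - x"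
  have xL: "norm x \<le> L" unfolding x_def using L s sd d by auto
  have \<Delta>eq: "\<Delta> = integral {s..s+\<delta>} h" unfolding \<Delta>_def x_def using Ydiff s d sd by auto
  have \<Delta>n: "norm \<Delta> \<le> \<Lambda> * \<delta>" unfolding \<Delta>_def x_def using Lip[of s "s + \<delta>"] s d sd by auto
  have hint2: "h integrable_on {s..s+\<delta>}" using hint integrable_on_subinterval s d sd by fastforce
  have blP: "bounded_linear (\<lambda>v. x \<bullet> (P *v v))"
    by (rule bounded_linear_compose[OF bounded_linear_inner_right matrix_vector_mul_bounded_linear])
  have lin: "x \<bullet> (P *v \<Delta>) = integral {s..s+\<delta>} (\<lambda>r. x \<bullet> (P *v h r))"
    unfolding \<Delta>eq using integral_linear[OF hint2 blP] by (simp add: o_def)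
  have pw: "x \<bullet> (P *v h r) \<le> pP * norm x * Kb - c * (norm x)\<^sup>2 + pP * L * KA * \<Lambda> * \<delta>"
    if r: "r \<in> {s..s+\<delta>}" for r
  proof -
    have rt: "r \<in> {t..0}" using r s sd by auto
    have split: "h r = b r + Am r *v x + Am r *v (Y r - x)"
      unfolding h_def by (simp add: matrix_vector_mult_diff_distrib)
    have e1: "x \<bullet> (P *v b r) \<le> pP * norm x * Kb"
    proof -
      have "x \<bullet> (P *v b r) \<le> pP * norm x * norm (b r)" using Pb[of x "b r"] by linarith
      also have "\<dots> \<le> pP * norm x * Kb" using bb[OF rt] pP by (intro mult_left_mono) auto
      finally show ?thesis .
    qed
    have e2: "x \<bullet> (P *v (Am r *v x)) \<le> - c * (norm x)\<^sup>2" by (rule diss[OF rt])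
    have e3: "x \<bullet> (P *v (Am r *v (Y r - x))) \<le> pP * L * KA * \<Lambda> * \<delta>"
    proof -
      have "x \<bullet> (P *v (Am r *v (Y r - x))) \<le> pP * norm x * norm (Am r *v (Y r - x))"
        using Pb[of x "Am r *v (Y r - x)"] by linarith
      also have "\<dots> \<le> pP * L * (KA * (\<Lambda> * \<delta>))"
      proof (rule mult_mono)
        show "pP * norm x \<le> pP * L" using xL pP by simp
        have "norm (Am r *v (Y r - x)) \<le> KA * norm (Y r - x)" by (rule Ab[OF rt])
        also have "\<dots> \<le> KA * (\<Lambda> * \<delta>)"
        proof (intro mult_left_mono KA)
          have "norm (Y r - x) \<le> \<Lambda> * (r - s)" unfolding x_def using Lip[of s r] r s sd d by auto
          also have "\<dots> \<le> \<Lambda> * \<delta>" using r \<Lambda>0 by (intro mult_left_mono) auto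
          finally show "norm (Y r - x) \<le> \<Lambda> * \<delta>" .
        qed
        finally show "norm (Am r *v (Y r - x)) \<le> KA * (\<Lambda> * \<delta>)" .
      qed (use pP L0 in auto)
      finally show ?thesis by (simp add: mult_ac)
    qed
    show ?thesis unfolding split
      using e1 e2 e3 by (simp add: matrix_vector_right_distrib inner_add_right)
  qed
  have int1: "x \<bullet> (P *v \<Delta>) \<le> \<delta> * (pP * norm x * Kb - c * (norm x)\<^sup>2 + pP * L * KA * \<Lambda> * \<delta>)"
  proof -
    have "integral {s..s+\<delta>} (\<lambda>r. x \<bullet> (P *v h r)) \<le> integral {s..s+\<delta>} (\<lambda>r. pP * norm x * Kb - c * (norm x)\<^sup>2 + pP * L * KA * \<Lambda> * \<delta>)"
    proof (rule integral_le)
      show "(\<lambda>r. x \<bullet> (P *v h r)) integrable_on {s..s + \<delta>}"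
        using integrable_linear[OF hint2 blP] by (simp add: o_def)
    qed (use pw in auto)
    then show ?thesis using lin d by simp
  qed
  have int2: "\<Delta> \<bullet> (P *v \<Delta>) \<le> pP * \<Lambda>\<^sup>2 * \<delta>\<^sup>2"
  proof -
    have "\<Delta> \<bullet> (P *v \<Delta>) \<le> pP * norm \<Delta> * norm \<Delta>" using Pb[of \<Delta> \<Delta>] by linarith
    also have "\<dots> \<le> pP * (\<Lambda> * \<delta>) * (\<Lambda> * \<delta>)"
      using \<Delta>n pP \<Lambda>0 d by (intro mult_mono mult_left_mono) auto
    finally show ?thesis by (simp add: power2_eq_square mult_ac)
  qed
  have Vx: "x \<bullet> (P *v x) \<le> pP * (norm x)\<^sup>2"
    using Pb[of x x] by (simp add: power2_eq_square mult_ac)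
  have q1: "2 * (pP * norm x * Kb - c * (norm x)\<^sup>2) \<le> (pP * Kb)\<^sup>2 / c - c * (norm x)\<^sup>2"
  proof -
    have "0 \<le> (pP * Kb - c * norm x)\<^sup>2" by simp
    then have "0 \<le> ((pP * Kb)\<^sup>2 - 2 * c * (pP * norm x * Kb) + c * (c * (norm x)\<^sup>2))"
      by (simp add: power2_eq_square algebra_simps)
    then have "0 \<le> ((pP * Kb)\<^sup>2 - 2 * c * (pP * norm x * Kb) + c * (c * (norm x)\<^sup>2)) / c"
      using c by simp
    also have "\<dots> = (pP * Kb)\<^sup>2 / c - 2 * (pP * norm x * Kb) + c * (norm x)\<^sup>2"
      using c by (simp add: field_simps)
    finally show ?thesis by (simp add: algebra_simps)
  qed
  have q2: "- c * (norm x)\<^sup>2 \<le> - (c / pP) * (x \<bullet> (P *v x))"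
  proof -
    have "(c / pP) * (x \<bullet> (P *v x)) \<le> (c / pP) * (pP * (norm x)\<^sup>2)"
      using Vx c pP by (intro mult_left_mono) auto
    also have "\<dots> = c * (norm x)\<^sup>2" using pP by simp
    finally show ?thesis by simp
  qed
  have "Y (s + \<delta>) = x + \<Delta>" unfolding \<Delta>_def by simp
  then have "Y (s + \<delta>) \<bullet> (P *v Y (s + \<delta>)) = x \<bullet> (P *v x) + 2 * (x \<bullet> (P *v \<Delta>)) + \<Delta> \<bullet> (P *v \<Delta>)"
    by (simp add: V_expand)
  also have "\<dots> \<le> x \<bullet> (P *v x) + \<delta> * (2 * (pP * norm x * Kb - c * (norm x)\<^sup>2)) + 2 * pP * L * KA * \<Lambda> * \<delta>\<^sup>2 + pP * \<Lambda>\<^sup>2 * \<delta>\<^sup>2"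
    using int1 int2 by (simp add: algebra_simps power2_eq_square)
  also have "\<dots> \<le> x \<bullet> (P *v x) + \<delta> * ((pP * Kb)\<^sup>2 / c - (c / pP) * (x \<bullet> (P *v x))) + 2 * pP * L * KA * \<Lambda> * \<delta>\<^sup>2 + pP * \<Lambda>\<^sup>2 * \<delta>\<^sup>2"
    using q1 q2 d by (intro add_mono mult_left_mono order_refl) auto
  also have "\<dots> = x \<bullet> (P *v x) * (1 - (c / pP) * \<delta>) + ((pP * Kb)\<^sup>2 / c) * \<delta>
     + (2 * pP * L * KA * (Kb + KA * L) + pP * (Kb + KA * L)\<^sup>2) * \<delta>\<^sup>2"
    by (simp add: \<Lambda>_def algebra_simps)
  finally show ?thesis by (simp add: x_def)
qed

end


context lyap
begin

lemma lyap_bound: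
  assumes Y: "sol b Am t y0 Y"
  shows "Y 0 \<bullet> (P *v Y 0) \<le> max (y0 \<bullet> (P *v y0)) (((pP * Kb)\<^sup>2 / c) / (c / pP))"
proof -
  obtain L1 where L1: "\<And>s. s \<in> {t..0} \<Longrightarrow> norm (Y s) \<le> L1" using sol_props(2)[OF Y] by blast
  define L where "L = max L1 0"
  have L: "\<And>s. s \<in> {t..0} \<Longrightarrow> norm (Y s) \<le> L" and L0: "L \<ge> 0"
    using L1 unfolding L_def by (auto intro: le_max_iff_disj[THEN iffD2])
  define \<alpha> where "\<alpha> = c / pP"
  define \<gamma> where "\<gamma> = (pP * Kb)\<^sup>2 / c"
  define E where "E = 2 * pP * L * KA * (Kb + KA * L) + pP * (Kb + KA * L)\<^sup>2"
  define V where "V = (\<lambda>x. x \<bullet> (P *v x))"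
  have \<alpha>: "\<alpha> > 0" unfolding \<alpha>_def using c pP by simp
  have E0: "E \<ge> 0" unfolding E_def using pP L0 KA Kb by simp
  have grid: "V (Y 0) \<le> max (V y0) ((\<gamma> + E * (- t / real n)) / \<alpha>)" if n: "n > 0" "\<alpha> * (- t / real n) \<le> 1" for n
  proof -
    define \<delta> where "\<delta> = - t / real n"
    define B where "B = max (V y0) ((\<gamma> + E * \<delta>) / \<alpha>)"
    have \<delta>0: "\<delta> \<ge> 0" unfolding \<delta>_def using t by (simp add: divide_nonpos_nonneg)
    have \<alpha>\<delta>: "1 - \<alpha> * \<delta> \<ge> 0" using n by (simp add: \<delta>_def)
    have gB: "\<gamma> + E * \<delta> \<le> \<alpha> * B"
    proof -
      have "(\<gamma> + E * \<delta>) / \<alpha> \<le> B" unfolding B_def by simp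
      then show ?thesis using \<alpha> by (simp add: pos_divide_le_eq mult.commute)
    qed
    have "k \<le> n \<longrightarrow> V (Y (t + real k * \<delta>)) \<le> B" for k
    proof (induction k)
      case 0
      then show ?case using sol_props(5)[OF Y] by (simp add: B_def)
    next
      case (Suc k)
      show ?case
      proof
        assume kn: "Suc k \<le> n"
        define s where "s = t + real k * \<delta>"
        have IH: "V (Y s) \<le> B" using Suc kn by (simp add: s_def)
        have st: "t \<le> s" unfolding s_def using \<delta>0 by simp
        have "s + \<delta> = t + real (Suc k) * \<delta>" unfolding s_def by (simp add: algebra_simps)
        also have "\<dots> \<le> t + real n * \<delta>" using kn \<delta>0 by (intro add_left_mono mult_right_mono) auto
        also have "\<dots> = 0" unfolding \<delta>_def using n by simp
        finally have sd: "s + \<delta> \<le> 0" .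
        have "V (Y (s + \<delta>)) \<le> V (Y s) * (1 - \<alpha> * \<delta>) + \<gamma> * \<delta> + E * \<delta>\<^sup>2"
          using step_bound[OF Y L L0 st \<delta>0 sd] by (simp add: V_def \<alpha>_def \<gamma>_def E_def)
        also have "\<dots> \<le> B * (1 - \<alpha> * \<delta>) + (\<alpha> * B) * \<delta>"
        proof -
          have "V (Y s) * (1 - \<alpha> * \<delta>) \<le> B * (1 - \<alpha> * \<delta>)" using IH \<alpha>\<delta> by (rule mult_right_mono)
          moreover have "(\<gamma> + E * \<delta>) * \<delta> \<le> (\<alpha> * B) * \<delta>" using gB \<delta>0 by (rule mult_right_mono)
          ultimately show ?thesis by (simp add: algebra_simps power2_eq_square)
        qed
        also have "\<dots> = B" by (simp add: algebra_simps)
        finally show "V (Y (t + real (Suc k) * \<delta>)) \<le> B"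
          by (simp add: s_def algebra_simps)
      qed
    qed
    from this[of n] have "V (Y (t + real n * \<delta>)) \<le> B" by simp
    moreover have "t + real n * \<delta> = 0" unfolding \<delta>_def using n by simp
    ultimately show ?thesis by (simp add: B_def \<delta>_def)
  qed
  have lim: "(\<lambda>n. max (V y0) ((\<gamma> + E * (- t / real n)) / \<alpha>)) \<longlonglongrightarrow> max (V y0) ((\<gamma> + E * 0) / \<alpha>)"
    by (intro tendsto_intros lim_const_over_n) (use \<alpha> in auto)
  have ev: "\<exists>N. \<forall>n\<ge>N. V (Y 0) \<le> max (V y0) ((\<gamma> + E * (- t / real n)) / \<alpha>)"
  proof (intro exI allI impI)
    fix n assume n: "n \<ge> nat \<lceil>\<alpha> * (- t)\<rceil> + 1"
    then have npos: "n > 0" by simp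
    have "\<alpha> * (- t) \<le> real n" using n by linarith
    then have "\<alpha> * (- t / real n) \<le> 1" using npos by (simp add: field_simps)
    then show "V (Y 0) \<le> max (V y0) ((\<gamma> + E * (- t / real n)) / \<alpha>)" using grid npos by blast
  qed
  have "V (Y 0) \<le> max (V y0) ((\<gamma> + E * 0) / \<alpha>)" by (rule LIMSEQ_le_const[OF lim ev])
  then show ?thesis by (simp add: V_def \<alpha>_def \<gamma>_def)
qed

end


definition adm :: "'a::euclidean_space set \<Rightarrow> real \<Rightarrow> real \<Rightarrow> (real \<Rightarrow> 'a) \<Rightarrow> bool" where
  "adm S t a u \<longleftrightarrow> (\<forall>s\<in>{t..<a}. u s \<in> S) \<and> u measurable_on {t..<a}"

lemma adm_init: "adm S t t u"
proof -
  have "(\<lambda>x. if x \<in> {t..<t} then u x else 0) measurable_on UNIV" by simp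
  then have "u measurable_on {t..<t}" by (simp only: measurable_on_UNIV)
  then show ?thesis unfolding adm_def by simp
qed

lemma const_admissible: "u1 \<in> S \<Longrightarrow> (\<lambda>_. u1) \<in> admissible S a b"
  unfolding admissible_def by simp

lemma adm_glue:
  assumes acc: "adm S t a acc" and v: "v \<in> admissible S a b" and ta: "t \<le> a" and ab: "a \<le> b"
  shows "adm S t b (glue a b v acc)"
proof -
  have vals: "\<forall>s\<in>{t..<b}. glue a b v acc s \<in> S"
    using acc v unfolding adm_def admissible_def glue_def by auto
  have m1: "(\<lambda>x. if x \<in> {t..<a} then acc x else 0) measurable_on UNIV"
    using acc measurable_on_UNIV unfolding adm_def by blast
  have m2: "(\<lambda>x. if x \<in> {a..<b} then v x else 0) measurable_on UNIV"
    using v measurable_on_UNIV unfolding admissible_def by blast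
  have "(\<lambda>x. (if x \<in> {t..<a} then acc x else 0) + (if x \<in> {a..<b} then v x else 0)) measurable_on UNIV"
    by (rule measurable_on_add[OF m1 m2])
  moreover have "(\<lambda>x. (if x \<in> {t..<a} then acc x else 0) + (if x \<in> {a..<b} then v x else 0))
      = (\<lambda>x. if x \<in> {t..<b} then glue a b v acc x else 0)"
    using ta ab by (intro ext) (auto simp: glue_def)
  ultimately have "glue a b v acc measurable_on {t..<b}"
    using measurable_on_UNIV by metis
  then show ?thesis using vals unfolding adm_def by blast
qed

lemma glue_const:
  assumes "\<forall>s\<in>{t..<a}. acc s = u1" "t \<le> a" "a \<le> b"
  shows "\<forall>s\<in>{t..<b}. glue a b (\<lambda>_. u1) acc s = u1"
  using assms unfolding glue_def by auto

lemma abs_SUP_le: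
  fixes f :: "'a \<Rightarrow> real"
  assumes "X \<noteq> {}" "\<And>x. x \<in> X \<Longrightarrow> \<bar>f x\<bar> \<le> B"
  shows "\<bar>SUP x\<in>X. f x\<bar> \<le> B"
proof -
  have bdd: "bdd_above (f ` X)" using assms by (intro bdd_aboveI[of _ B]) force
  obtain x0 where x0: "x0 \<in> X" using assms by blast
  have "(SUP x\<in>X. f x) \<le> B" using assms by (intro cSUP_least) force+
  moreover have "f x0 \<le> (SUP x\<in>X. f x)" by (rule cSUP_upper[OF x0 bdd])
  ultimately show ?thesis using assms(2)[OF x0] by linarith
qed

lemma abs_INF_le:
  fixes f :: "'a \<Rightarrow> real"
  assumes "X \<noteq> {}" "\<And>x. x \<in> X \<Longrightarrow> \<bar>f x\<bar> \<le> B"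
  shows "\<bar>INF x\<in>X. f x\<bar> \<le> B"
proof -
  have bdd: "bdd_below (f ` X)" using assms by (intro bdd_belowI[of _ "-B"]) force
  obtain x0 where x0: "x0 \<in> X" using assms by blast
  have "- B \<le> (INF x\<in>X. f x)" using assms by (intro cINF_greatest) (auto, smt (verit))
  moreover have "(INF x\<in>X. f x) \<le> f x0" by (rule cINF_lower[OF bdd x0])
  ultimately show ?thesis using assms(2)[OF x0] by linarith
qed

lemma adm_ne: "S \<noteq> {} \<Longrightarrow> admissible S a b \<noteq> {}"
  using const_admissible by blast

lemma last_0: "last (a # bs) = 0 \<Longrightarrow> bs = [] \<Longrightarrow> a = 0" by simp

lemma v_bounds:
  fixes J :: "(real \<Rightarrow> 'a::euclidean_space) \<Rightarrow> (real \<Rightarrow> 'b::euclidean_space) \<Rightarrow> real"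
  assumes U: "U \<noteq> {}" and D: "D \<noteq> {}"
    and JB: "\<And>u d. adm U t 0 u \<Longrightarrow> adm D t 0 d \<Longrightarrow> \<bar>J u d\<bar> \<le> B"
  shows "sorted_wrt (<) (a # bs) \<Longrightarrow> last (a # bs) = 0 \<Longrightarrow> t \<le> a \<Longrightarrow> adm U t a uacc \<Longrightarrow> adm D t a dacc \<Longrightarrow>
    \<bar>vplus U D J a bs uacc dacc\<bar> \<le> B \<and> \<bar>vminus U D J a bs uacc dacc\<bar> \<le> B"
proof (induction bs arbitrary: a uacc dacc)
  case Nil
  then show ?case using JB by simp
next
  case (Cons b bs)
  have ab: "a < b" using Cons.prems by simp
  have IH: "\<bar>vplus U D J b bs (glue a b u uacc) (glue a b d dacc)\<bar> \<le> B \<and>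
            \<bar>vminus U D J b bs (glue a b u uacc) (glue a b d dacc)\<bar> \<le> B"
    if "u \<in> admissible U a b" "d \<in> admissible D a b" for u d
    using Cons.prems ab that
    by (intro Cons.IH adm_glue) auto
  show ?case
    using IH adm_ne[OF U] adm_ne[OF D]
    by (auto intro!: abs_SUP_le abs_INF_le)
qed


lemma v_upper:
  fixes J :: "(real \<Rightarrow> 'a::euclidean_space) \<Rightarrow> (real \<Rightarrow> 'b::euclidean_space) \<Rightarrow> real"
  assumes U: "U \<noteq> {}" and D: "D \<noteq> {}"
    and JB: "\<And>u d. adm U t 0 u \<Longrightarrow> adm D t 0 d \<Longrightarrow> \<bar>J u d\<bar> \<le> B"
    and u1: "u1 \<in> U"
    and Jup: "\<And>u d. adm U t 0 u \<Longrightarrow> (\<forall>s\<in>{t..<0}. u s = u1) \<Longrightarrow> adm D t 0 d \<Longrightarrow> J u d \<le> C"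
  shows "sorted_wrt (<) (a # bs) \<Longrightarrow> last (a # bs) = 0 \<Longrightarrow> t \<le> a \<Longrightarrow> adm U t a uacc \<Longrightarrow>
    (\<forall>s\<in>{t..<a}. uacc s = u1) \<Longrightarrow> adm D t a dacc \<Longrightarrow>
    vplus U D J a bs uacc dacc \<le> C \<and> vminus U D J a bs uacc dacc \<le> C"
proof (induction bs arbitrary: a uacc dacc)
  case Nil
  then show ?case using Jup by simp
next
  case (Cons b bs)
  have ab: "a < b" using Cons.prems by simp
  have bnd: "\<bar>vplus U D J b bs (glue a b u uacc) (glue a b d dacc)\<bar> \<le> B \<and>
            \<bar>vminus U D J b bs (glue a b u uacc) (glue a b d dacc)\<bar> \<le> B"
    if "u \<in> admissible U a b" "d \<in> admissible D a b" for u d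
    using Cons.prems ab that
    by (intro v_bounds[OF U D JB] adm_glue) auto
  have IH: "vplus U D J b bs (glue a b (\<lambda>_. u1) uacc) (glue a b d dacc) \<le> C \<and>
            vminus U D J b bs (glue a b (\<lambda>_. u1) uacc) (glue a b d dacc) \<le> C"
    if "d \<in> admissible D a b" for d
    using Cons.prems ab that const_admissible[OF u1]
    by (intro Cons.IH adm_glue glue_const) auto
  have c1: "(\<lambda>_. u1) \<in> admissible U a b" by (rule const_admissible[OF u1])
  have p1: "vplus U D J a (b # bs) uacc dacc \<le> C"
  proof -
    let ?F = "\<lambda>u. SUP d\<in>admissible D a b. vplus U D J b bs (glue a b u uacc) (glue a b d dacc)"
    have "bdd_below (?F ` admissible U a b)"
    proof (rule bdd_belowI[of _ "-B"])
      fix x assume "x \<in> ?F ` admissible U a b"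
      then obtain u where u: "u \<in> admissible U a b" and x: "x = ?F u" by blast
      have "\<bar>?F u\<bar> \<le> B" using bnd[OF u] adm_ne[OF D] by (intro abs_SUP_le) auto
      then show "- B \<le> x" using x by linarith
    qed
    then have "(INF u\<in>admissible U a b. ?F u) \<le> ?F (\<lambda>_. u1)" by (rule cINF_lower[OF _ c1])
    also have "?F (\<lambda>_. u1) \<le> C" using IH adm_ne[OF D] by (intro cSUP_least) auto
    finally show ?thesis by simp
  qed
  have p2: "vminus U D J a (b # bs) uacc dacc \<le> C"
  proof -
    have "(INF u\<in>admissible U a b. vminus U D J b bs (glue a b u uacc) (glue a b d dacc)) \<le> C"
      if d: "d \<in> admissible D a b" for d
    proof -
      have "bdd_below ((\<lambda>u. vminus U D J b bs (glue a b u uacc) (glue a b d dacc)) ` admissible U a b)"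
        using bnd[OF _ d] by (intro bdd_belowI[of _ "-B"]) force
      then have "(INF u\<in>admissible U a b. vminus U D J b bs (glue a b u uacc) (glue a b d dacc))
          \<le> vminus U D J b bs (glue a b (\<lambda>_. u1) uacc) (glue a b d dacc)" by (rule cINF_lower[OF _ c1])
      also have "\<dots> \<le> C" using IH[OF d] by simp
      finally show ?thesis .
    qed
    then show ?thesis using adm_ne[OF D] by (simp add: cSUP_least)
  qed
  show ?case using p1 p2 by simp
qed

lemma v_lower:
  fixes J :: "(real \<Rightarrow> 'a::euclidean_space) \<Rightarrow> (real \<Rightarrow> 'b::euclidean_space) \<Rightarrow> real"
  assumes U: "U \<noteq> {}" and D: "D \<noteq> {}"
    and JB: "\<And>u d. adm U t 0 u \<Longrightarrow> adm D t 0 d \<Longrightarrow> \<bar>J u d\<bar> \<le> B"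
    and d1: "d1 \<in> D"
    and Jlo: "\<And>u d. adm U t 0 u \<Longrightarrow> adm D t 0 d \<Longrightarrow> (\<forall>s\<in>{t..<0}. d s = d1) \<Longrightarrow> C \<le> J u d"
  shows "sorted_wrt (<) (a # bs) \<Longrightarrow> last (a # bs) = 0 \<Longrightarrow> t \<le> a \<Longrightarrow> adm U t a uacc \<Longrightarrow>
    adm D t a dacc \<Longrightarrow> (\<forall>s\<in>{t..<a}. dacc s = d1) \<Longrightarrow>
    C \<le> vplus U D J a bs uacc dacc \<and> C \<le> vminus U D J a bs uacc dacc"
proof (induction bs arbitrary: a uacc dacc)
  case Nil
  then show ?case using Jlo by simp
next
  case (Cons b bs)
  have ab: "a < b" using Cons.prems by simp
  have bnd: "\<bar>vplus U D J b bs (glue a b u uacc) (glue a b d dacc)\<bar> \<le> B \<and>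
            \<bar>vminus U D J b bs (glue a b u uacc) (glue a b d dacc)\<bar> \<le> B"
    if "u \<in> admissible U a b" "d \<in> admissible D a b" for u d
    using Cons.prems ab that
    by (intro v_bounds[OF U D JB] adm_glue) auto
  have IH: "C \<le> vplus U D J b bs (glue a b u uacc) (glue a b (\<lambda>_. d1) dacc) \<and>
            C \<le> vminus U D J b bs (glue a b u uacc) (glue a b (\<lambda>_. d1) dacc)"
    if "u \<in> admissible U a b" for u
    using Cons.prems ab that const_admissible[OF d1]
    by (intro Cons.IH adm_glue glue_const) auto
  have c1: "(\<lambda>_. d1) \<in> admissible D a b" by (rule const_admissible[OF d1])
  have p1: "C \<le> vminus U D J a (b # bs) uacc dacc"
  proof -
    let ?F = "\<lambda>d. INF u\<in>admissible U a b. vminus U D J b bs (glue a b u uacc) (glue a b d dacc)"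
    have "bdd_above (?F ` admissible D a b)"
    proof (rule bdd_aboveI[of _ "B"])
      fix x assume "x \<in> ?F ` admissible D a b"
      then obtain d where d: "d \<in> admissible D a b" and x: "x = ?F d" by blast
      have "\<bar>?F d\<bar> \<le> B" using bnd[OF _ d] adm_ne[OF U] by (intro abs_INF_le) auto
      then show "x \<le> B" using x by linarith
    qed
    have "C \<le> ?F (\<lambda>_. d1)" using IH adm_ne[OF U] by (intro cINF_greatest) auto
    also have "?F (\<lambda>_. d1) \<le> (SUP d\<in>admissible D a b. ?F d)" by (rule cSUP_upper[OF c1]) fact
    finally show ?thesis by simp
  qed
  have p2: "C \<le> vplus U D J a (b # bs) uacc dacc"
  proof -
    have "C \<le> (SUP d\<in>admissible D a b. vplus U D J b bs (glue a b u uacc) (glue a b d dacc))"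
      if u: "u \<in> admissible U a b" for u
    proof -
      have "bdd_above ((\<lambda>d. vplus U D J b bs (glue a b u uacc) (glue a b d dacc)) ` admissible D a b)"
        using bnd[OF u] by (intro bdd_aboveI[of _ "B"]) force
      have "C \<le> vplus U D J b bs (glue a b u uacc) (glue a b (\<lambda>_. d1) dacc)" using IH[OF u] by simp
      also have "\<dots> \<le> (SUP d\<in>admissible D a b. vplus U D J b bs (glue a b u uacc) (glue a b d dacc))"
        by (rule cSUP_upper[OF c1]) fact
      finally show ?thesis .
    qed
    then show ?thesis using adm_ne[OF U] by (simp add: cINF_greatest)
  qed
  show ?case using p1 p2 by simp
qed


lemma quad_neg:
  fixes Q :: "'p::topological_space \<Rightarrow> 'a::euclidean_space \<Rightarrow> real"
  assumes K: "compact K" "K \<noteq> {}"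
    and cont: "continuous_on (K \<times> sphere 0 1) (\<lambda>q. Q (fst q) (snd q))"
    and hom: "\<And>p x r. p \<in> K \<Longrightarrow> Q p (r *\<^sub>R x) = r\<^sup>2 * Q p x"
    and neg: "\<And>p x. p \<in> K \<Longrightarrow> x \<noteq> 0 \<Longrightarrow> Q p x < 0"
  shows "\<exists>c>0. \<forall>p\<in>K. \<forall>x. Q p x \<le> - c * (norm x)\<^sup>2"
proof -
  obtain e :: 'a where e: "e \<in> Basis" using nonempty_Basis by blast
  have "norm e = 1" using e by (simp add: norm_Basis)
  then have es: "e \<in> sphere 0 1" by simp
  obtain k where k: "k \<in> K" using K(2) by blast
  have "(k, e) \<in> K \<times> sphere 0 1" using k es by (rule SigmaI)
  then have ne: "K \<times> sphere (0::'a) 1 \<noteq> {}" by blast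
  have cp: "compact (K \<times> sphere (0::'a) 1)" using K by (intro compact_Times compact_sphere)
  obtain q0 where q0: "q0 \<in> K \<times> sphere 0 1" and mx: "\<And>q. q \<in> K \<times> sphere 0 1 \<Longrightarrow> Q (fst q) (snd q) \<le> Q (fst q0) (snd q0)"
    using continuous_attains_sup[OF cp ne cont] by blast
  define c where "c = - Q (fst q0) (snd q0)"
  have "snd q0 \<noteq> 0" "fst q0 \<in> K" using q0 by (auto simp: mem_Times_iff)
  then have c: "c > 0" unfolding c_def using neg[of "fst q0" "snd q0"] by auto
  have "Q p x \<le> - c * (norm x)\<^sup>2" if p: "p \<in> K" for p x
  proof (cases "x = 0")
    case True
    then show ?thesis using hom[OF p, of 0 x] by simp
  next
    case False
    define w where "w = x /\<^sub>R norm x"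
    have w: "(p, w) \<in> K \<times> sphere 0 1" using p False by (simp add: w_def)
    have xw: "x = norm x *\<^sub>R w" using False by (simp add: w_def)
    have "Q p x = (norm x)\<^sup>2 * Q p w" by (subst xw) (rule hom[OF p])
    also have "\<dots> \<le> (norm x)\<^sup>2 * (- c)" using mx[OF w] by (intro mult_left_mono) (auto simp: c_def)
    finally show ?thesis by (simp add: mult.commute)
  qed
  then show ?thesis using c by blast
qed

lemma cont_UD:
  fixes F :: "'z::topological_space \<Rightarrow> 'u::topological_space \<Rightarrow> 'd::topological_space \<Rightarrow> 'b::topological_space"
  assumes "continuous_on (UNIV \<times> U \<times> D) (\<lambda>(z, u, d). F z u d)"
  shows "continuous_on (U \<times> D) (\<lambda>p. F z (fst p) (snd p))"
proof -
  have "continuous_on (U \<times> D) (\<lambda>p. (\<lambda>(z, u, d). F z u d) (z, p))"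
    by (rule continuous_on_compose2[OF assms]) (auto intro!: continuous_intros)
  then show ?thesis by (simp add: case_prod_beta)
qed

lemma cont_bound_UD:
  fixes F :: "'u::topological_space \<times> 'd::topological_space \<Rightarrow> 'b::real_normed_vector"
  assumes "compact U" "compact D" "continuous_on (U \<times> D) F"
  shows "\<exists>K\<ge>0. \<forall>u\<in>U. \<forall>d\<in>D. norm (F (u, d)) \<le> K"
proof -
  have "compact (F ` (U \<times> D))" using assms by (intro compact_continuous_image compact_Times)
  then obtain K where "\<forall>x\<in>F ` (U \<times> D). norm x \<le> K" by (meson bounded_iff compact_imp_bounded)
  then have "\<forall>u\<in>U. \<forall>d\<in>D. norm (F (u, d)) \<le> max K 0" by force
  then show ?thesis by (intro exI[of _ "max K 0"]) auto
qed

lemma Psym_lemma: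
  fixes P :: "real^'n^'n"
  assumes "transpose P = P"
  shows "x \<bullet> (P *v y) = y \<bullet> (P *v x)"
proof -
  have "x \<bullet> (P *v y) = (x v* P) \<bullet> y" by (simp add: dot_lmul_matrix)
  also have "x v* P = transpose P *v x" by simp
  also have "\<dots> = P *v x" using assms by simp
  finally show ?thesis by (simp add: inner_commute)
qed

lemma negdef_lemma:
  fixes P A :: "real^'n^'n"
  assumes "transpose P = P" "negdef (transpose A ** P + P ** A)" "x \<noteq> 0"
  shows "x \<bullet> (P *v (A *v x)) < 0"
proof -
  have "x \<bullet> ((transpose A ** P + P ** A) *v x) < 0" using assms unfolding negdef_def by blast
  moreover have "x \<bullet> ((transpose A ** P + P ** A) *v x) = x \<bullet> (transpose A *v (P *v x)) + x \<bullet> (P *v (A *v x))"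
    by (simp add: matrix_vector_mult_add_rdistrib matrix_vector_mul_assoc inner_add_right)
  moreover have "x \<bullet> (transpose A *v (P *v x)) = (A *v x) \<bullet> (P *v x)"
  proof -
    have "x \<bullet> (transpose A *v (P *v x)) = (x v* transpose A) \<bullet> (P *v x)"
      by (simp only: dot_lmul_matrix)
    also have "x v* transpose A = A *v x" by (rule vector_transpose_matrix)
    finally show ?thesis .
  qed
  moreover have "(A *v x) \<bullet> (P *v x) = x \<bullet> (P *v (A *v x))"
    using Psym_lemma[OF assms(1)] by simp
  ultimately show ?thesis by simp
qed


lemma car_cong:
  assumes "\<And>s. t \<le> s \<Longrightarrow> s < 0 \<Longrightarrow> u' s = u s \<and> d' s = d s"
  shows "is_car_sol g A z u' d' t y0 Y = is_car_sol g A z u d t y0 Y"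
proof -
  have "((\<lambda>s. g z (u' s) (d' s) + A z (u' s) (d' s) *v Y s) has_integral (Y \<tau> - y0)) {t..\<tau>} \<longleftrightarrow>
        ((\<lambda>s. g z (u s) (d s) + A z (u s) (d s) *v Y s) has_integral (Y \<tau> - y0)) {t..\<tau>}"
    if "\<tau> \<le> 0" for \<tau>
    by (rule has_integral_spike_eq[of "{0}"]) (use assms that in auto)
  then show ?thesis unfolding is_car_sol_def by auto
qed

lemma ytil_cong:
  assumes "\<And>s. t \<le> s \<Longrightarrow> s < 0 \<Longrightarrow> u' s = u s \<and> d' s = d s"
  shows "ytil g A z u' d' t y0 = ytil g A z u d t y0"
proof -
  have "\<And>Y. is_car_sol g A z u' d' t y0 Y = is_car_sol g A z u d t y0 Y"
    by (rule car_cong) (use assms in blast)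
  then show ?thesis unfolding ytil_def by simp
qed

lemma Jtil_cong:
  assumes "\<And>s. t \<le> s \<Longrightarrow> s < 0 \<Longrightarrow> u' s = u s \<and> d' s = d s"
  shows "Jtil f g A M z lam t y0 u' d' = Jtil f g A M z lam t y0 u d"
proof -
  have e: "ytil g A z u' d' t y0 = ytil g A z u d t y0" by (rule ytil_cong) (use assms in blast)
  show ?thesis unfolding Jtil_def e
  by (intro arg_cong[where f="\<lambda>x. (1 / \<bar>t\<bar>) * x"] integral_spike[of "{0}"]) (use assms in auto)
qed


definition hat :: "'a \<Rightarrow> (real \<Rightarrow> 'a) \<Rightarrow> real \<Rightarrow> 'a" where
  "hat a v = (\<lambda>s. if s < 0 then v s else a)"

lemma hat_props:
  fixes v :: "real \<Rightarrow> 'a::euclidean_space"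
  assumes t: "t < 0" and v: "adm S t 0 v" and a: "a \<in> S"
  shows "hat a v measurable_on {t..0}" "\<And>s. s \<in> {t..0} \<Longrightarrow> hat a v s \<in> S"
proof -
  have "v measurable_on {t..<0}" using v unfolding adm_def by blast
  moreover have "negligible (({t..<0} - {t..0}) \<union> ({t..0} - {t..<0}))"
    by (rule negligible_subset[of "{0}"]) auto
  ultimately have "v measurable_on {t..0}" by (rule measurable_on_spike_set)
  then show "hat a v measurable_on {t..0}"
    by (rule measurable_on_spike[of _ _ "{0}"]) (auto simp: hat_def)
  show "\<And>s. s \<in> {t..0} \<Longrightarrow> hat a v s \<in> S"
    using v a unfolding adm_def hat_def by auto
qed

locale mainloc =
  fixes U :: "(real^'mu) set" and D :: "(real^'md) set"
    and f :: "real^'nz \<Rightarrow> real^'mu \<Rightarrow> real^'md \<Rightarrow> real^'nz"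
    and g :: "real^'nz \<Rightarrow> real^'mu \<Rightarrow> real^'md \<Rightarrow> real^'ny"
    and A :: "real^'nz \<Rightarrow> real^'mu \<Rightarrow> real^'md \<Rightarrow> real^'ny^'ny"
    and M :: "real^'nz \<Rightarrow> real^'ny^'nz"
    and y :: "real^'ny" and z :: "real^'nz" and lam :: "real^'nz"
    and Kg KA KF :: real and P :: "real^'ny^'ny" and c pP m :: real
  assumes U: "compact U" "U \<noteq> {}" and D: "compact D" "D \<noteq> {}"
    and cf: "continuous_on (U \<times> D) (\<lambda>p. f z (fst p) (snd p))"
    and cg: "continuous_on (U \<times> D) (\<lambda>p. g z (fst p) (snd p))"
    and cA: "continuous_on (U \<times> D) (\<lambda>p. A z (fst p) (snd p))"
    and gb: "\<And>u d. u \<in> U \<Longrightarrow> d \<in> D \<Longrightarrow> norm (g z u d) \<le> Kg" and Kg: "Kg \<ge> 0"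
    and Ab: "\<And>u d x. u \<in> U \<Longrightarrow> d \<in> D \<Longrightarrow> norm (A z u d *v x) \<le> KA * norm x" and KA: "KA \<ge> 0"
    and Fb: "\<And>u d. u \<in> U \<Longrightarrow> d \<in> D \<Longrightarrow> \<bar>lam \<bullet> Fmap f g M z u d\<bar> \<le> KF"
    and Psym: "\<And>x y. x \<bullet> (P *v y) = y \<bullet> (P *v x)"
    and diss: "\<And>u d x. u \<in> U \<Longrightarrow> d \<in> D \<Longrightarrow> x \<bullet> (P *v (A z u d *v x)) \<le> - c * (norm x)\<^sup>2"
    and c: "c > 0"
    and Pb: "\<And>x y. \<bar>x \<bullet> (P *v y)\<bar> \<le> pP * norm x * norm y" and pP: "pP > 0"
    and m: "m > 0" and Pm: "\<And>x. m * (norm x)\<^sup>2 \<le> x \<bullet> (P *v x)"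
begin

definition R where "R = sqrt (max (y \<bullet> (P *v y)) (((pP * Kg)\<^sup>2 / c) / (c / pP)) / m)"

lemma cF: "continuous_on (U \<times> D) (\<lambda>p. lam \<bullet> Fmap f g M z (fst p) (snd p))"
  unfolding Fmap_def using cf cg by (intro continuous_intros) auto

lemma KJ:
  assumes t: "t < 0" and u: "adm U t 0 u" and d: "adm D t 0 d" and u0: "u0 \<in> U" and d0: "d0 \<in> D"
  shows "(\<lambda>s. lam \<bullet> Fmap f g M z (hat u0 u s) (hat d0 d s)) integrable_on {t..0} \<and>
    (\<exists>Y0. norm Y0 \<le> R \<and> Jtil f g A M z lam t y u d =
       (1 / \<bar>t\<bar>) * (integral {t..0} (\<lambda>s. lam \<bullet> Fmap f g M z (hat u0 u s) (hat d0 d s)) + lam \<bullet> (M z *v (Y0 - y))))"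
proof -
  define uh where "uh = hat u0 u"
  define dh where "dh = hat d0 d"
  have uhm: "uh measurable_on {t..0}" and uhv: "\<And>s. s \<in> {t..0} \<Longrightarrow> uh s \<in> U"
    using hat_props[OF t u u0] unfolding uh_def by auto
  have dhm: "dh measurable_on {t..0}" and dhv: "\<And>s. s \<in> {t..0} \<Longrightarrow> dh s \<in> D"
    using hat_props[OF t d d0] unfolding dh_def by auto
  have pm: "(\<lambda>s. (uh s, dh s)) measurable_on {t..0}" by (rule measurable_on_Pair[OF uhm dhm])
  have pv: "\<And>s. s \<in> {t..0} \<Longrightarrow> (uh s, dh s) \<in> U \<times> D" using uhv dhv by auto
  have clUD: "closed (U \<times> D)" using U D by (intro closed_Times compact_imp_closed)
  define b where "b = (\<lambda>s. g z (uh s) (dh s))"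
  define Am where "Am = (\<lambda>s. A z (uh s) (dh s))"
  define ph where "ph = (\<lambda>s. lam \<bullet> Fmap f g M z (uh s) (dh s))"
  have bm: "b measurable_on {t..0}"
    using compose_measurable_on[OF pm _ clUD pv cg] unfolding b_def by simp
  have Amm: "Am measurable_on {t..0}"
    using compose_measurable_on[OF pm _ clUD pv cA] unfolding Am_def by simp
  have phm: "ph measurable_on {t..0}"
    using compose_measurable_on[OF pm _ clUD pv cF] unfolding ph_def by simp
  have phi: "ph integrable_on {t..0}"
    by (rule mb_integrable[OF phm]) (use Fb uhv dhv in \<open>auto simp: ph_def\<close>)
  interpret L: lyap b Am t Kg KA P c pP
  proof (unfold_locales)
    show "t < 0" by fact
    show "b measurable_on {t..0}" by fact
    show "Am measurable_on {t..0}" by fact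
    show "norm (b s) \<le> Kg" if "s \<in> {t..0}" for s using gb uhv dhv that by (simp add: b_def)
    show "norm (Am s *v x) \<le> KA * norm x" if "s \<in> {t..0}" for s x using Ab uhv dhv that by (simp add: Am_def)
    show "x \<bullet> (P *v (Am s *v x)) \<le> - c * (norm x)\<^sup>2" if "s \<in> {t..0}" for s x
      using diss uhv dhv that by (simp add: Am_def)
  qed (use KA Kg Psym c Pb pP in auto)
  obtain Y where Ys: "sol b Am t y Y" and Yz: "\<And>\<tau>. \<tau> \<notin> {t..0} \<Longrightarrow> Y \<tau> = 0"
    using L.sol_exists0 by blast
  have car: "is_car_sol g A z uh dh t y Y' \<longleftrightarrow> sol b Am t y Y'" for Y'
    by (simp add: is_car_sol_def sol_def b_def Am_def)
  have yt: "ytil g A z uh dh t y = Y"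
    unfolding ytil_def
  proof (rule the1_equality)
    show "\<exists>!Y. is_car_sol g A z uh dh t y Y \<and> (\<forall>\<tau>. \<tau> \<notin> {t..0} \<longrightarrow> Y \<tau> = 0)"
    proof (rule ex1I[of _ Y])
      show "is_car_sol g A z uh dh t y Y \<and> (\<forall>\<tau>. \<tau> \<notin> {t..0} \<longrightarrow> Y \<tau> = 0)" using Ys Yz car by blast
      fix Y2 assume Y2: "is_car_sol g A z uh dh t y Y2 \<and> (\<forall>\<tau>. \<tau> \<notin> {t..0} \<longrightarrow> Y2 \<tau> = 0)"
      show "Y2 = Y"
      proof
        fix \<tau>
        show "Y2 \<tau> = Y \<tau>"
        proof (cases "\<tau> \<in> {t..0}")
          case True
          then show ?thesis using L.sol_unique[of y Y2 Y \<tau>] Y2 Ys car by blast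
        next
          case False
          then show ?thesis using Y2 Yz by auto
        qed
      qed
    qed
    show "is_car_sol g A z uh dh t y Y \<and> (\<forall>\<tau>. \<tau> \<notin> {t..0} \<longrightarrow> Y \<tau> = 0)" using Ys Yz car by blast
  qed
  have Jeq: "Jtil f g A M z lam t y u d = Jtil f g A M z lam t y uh dh"
    by (rule Jtil_cong[symmetric]) (auto simp: uh_def dh_def hat_def)
  define h where "h = (\<lambda>s. b s + Am s *v Y s)"
  have hi: "h integrable_on {t..0}" unfolding h_def by (rule L.sol_props(4)[OF Ys])
  have blM: "bounded_linear (\<lambda>v. lam \<bullet> (M z *v v))"
    by (rule bounded_linear_compose[OF bounded_linear_inner_right matrix_vector_mul_bounded_linear])
  have pt: "lam \<bullet> (f z (uh s) (dh s) + M z *v (A z (uh s) (dh s) *v Y s)) = ph s + lam \<bullet> (M z *v h s)" for s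
    by (simp add: ph_def h_def b_def Am_def Fmap_def matrix_vector_right_distrib inner_add_right inner_diff_right)
  have i2: "(\<lambda>s. lam \<bullet> (M z *v h s)) integrable_on {t..0}"
    using integrable_linear[OF hi blM] by (simp add: o_def)
  have "integral {t..0} (\<lambda>s. lam \<bullet> (M z *v h s)) = lam \<bullet> (M z *v integral {t..0} h)"
    using integral_linear[OF hi blM] by (simp add: o_def)
  also have "integral {t..0} h = Y 0 - y"
    using L.sol_props(3)[OF Ys, of 0] t by (simp add: h_def)
  finally have i2v: "integral {t..0} (\<lambda>s. lam \<bullet> (M z *v h s)) = lam \<bullet> (M z *v (Y 0 - y))" .
  have "Jtil f g A M z lam t y uh dh = (1 / \<bar>t\<bar>) * integral {t..0} (\<lambda>s. ph s + lam \<bullet> (M z *v h s))"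
    unfolding Jtil_def yt pt ..
  also have "integral {t..0} (\<lambda>s. ph s + lam \<bullet> (M z *v h s)) = integral {t..0} ph + lam \<bullet> (M z *v (Y 0 - y))"
    using integral_add[OF phi i2] i2v by simp
  finally have Jv: "Jtil f g A M z lam t y u d = (1 / \<bar>t\<bar>) * (integral {t..0} ph + lam \<bullet> (M z *v (Y 0 - y)))"
    using Jeq by simp
  have "Y 0 \<bullet> (P *v Y 0) \<le> max (y \<bullet> (P *v y)) (((pP * Kg)\<^sup>2 / c) / (c / pP))"
    by (rule L.lyap_bound[OF Ys])
  then have "m * (norm (Y 0))\<^sup>2 \<le> max (y \<bullet> (P *v y)) (((pP * Kg)\<^sup>2 / c) / (c / pP))"
    using Pm[of "Y 0"] by linarith
  then have "(norm (Y 0))\<^sup>2 \<le> max (y \<bullet> (P *v y)) (((pP * Kg)\<^sup>2 / c) / (c / pP)) / m"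
    using m by (simp add: field_simps)
  then have "norm (Y 0) \<le> R" unfolding R_def by (rule real_le_rsqrt)
  then show ?thesis using Jv phi unfolding ph_def uh_def dh_def by blast
qed

end


context mainloc
begin

lemma final:
  assumes saddle: "(INF u\<in>U. SUP d\<in>D. lam \<bullet> Fmap f g M z u d) = (SUP d\<in>D. INF u\<in>U. lam \<bullet> Fmap f g M z u d)"
  shows "\<exists>\<beta>>0. \<forall>t<0. \<forall>ts. is_partition t ts \<longrightarrow>
           \<bar>Vplus U D f g A M z lam ts t y - Ham U D f g M z lam\<bar> \<le> \<beta> / \<bar>t\<bar> \<and>
           \<bar>Vminus U D f g A M z lam ts t y - Ham U D f g M z lam\<bar> \<le> \<beta> / \<bar>t\<bar>"
proof -
  define \<phi> where "\<phi> = (\<lambda>u d. lam \<bullet> Fmap f g M z u d)"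
  define H where "H = Ham U D f g M z lam"
  have Hdef: "H = (INF u\<in>U. SUP d\<in>D. \<phi> u d)" by (simp add: H_def Ham_def \<phi>_def)
  have Hdef2: "H = (SUP d\<in>D. INF u\<in>U. \<phi> u d)" using saddle by (simp add: Hdef \<phi>_def)
  define CM where "CM = real CARD('nz) * real CARD('ny) * norm (M z)"
  define \<beta>0 where "\<beta>0 = norm lam * CM * (R + norm y)"
  have R0: "R \<ge> 0"
  proof -
    have "0 \<le> m * (norm y)\<^sup>2" using m by simp
    then have "0 \<le> y \<bullet> (P *v y)" using Pm[of y] by linarith
    then have "0 \<le> max (y \<bullet> (P *v y)) (((pP * Kg)\<^sup>2 / c) / (c / pP))" by (simp add: le_max_iff_disj)
    then have "0 \<le> max (y \<bullet> (P *v y)) (((pP * Kg)\<^sup>2 / c) / (c / pP)) / m" using m by simp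
    then show ?thesis unfolding R_def by simp
  qed
  have \<beta>0: "\<beta>0 \<ge> 0" unfolding \<beta>0_def CM_def using R0 by simp
  have Eb: "\<bar>lam \<bullet> (M z *v (Y0 - y))\<bar> \<le> \<beta>0" if "norm Y0 \<le> R" for Y0
  proof -
    have "\<bar>lam \<bullet> (M z *v (Y0 - y))\<bar> \<le> norm lam * norm (M z *v (Y0 - y))" by (rule Cauchy_Schwarz_ineq2)
    also have "\<dots> \<le> norm lam * (CM * norm (Y0 - y))"
      unfolding CM_def by (intro mult_left_mono mv_bound) auto
    also have "\<dots> \<le> norm lam * (CM * (R + norm y))"
    proof -
      have "norm (Y0 - y) \<le> R + norm y" using that norm_triangle_ineq4[of Y0 y] by linarith
      then show ?thesis unfolding CM_def by (intro mult_left_mono) auto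
    qed
    finally show ?thesis by (simp add: \<beta>0_def mult_ac)
  qed
  have KF0: "KF \<ge> 0" using Fb U D by (meson abs_ge_zero all_not_in_conv order_trans)
  have \<phi>b: "\<And>u d. u \<in> U \<Longrightarrow> d \<in> D \<Longrightarrow> \<bar>\<phi> u d\<bar> \<le> KF" using Fb by (simp add: \<phi>_def)
  obtain us where us: "us \<in> U" using U by blast
  obtain ds where ds: "ds \<in> D" using D by blast
  have main: "\<bar>Vplus U D f g A M z lam ts t y - H\<bar> \<le> \<beta>0 / \<bar>t\<bar> \<and> \<bar>Vminus U D f g A M z lam ts t y - H\<bar> \<le> \<beta>0 / \<bar>t\<bar>"
    if t: "t < 0" and ts: "is_partition t ts" for t ts
  proof -
    define J where "J = Jtil f g A M z lam t y"
    have at: "\<bar>t\<bar> = - t" using t by simp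
    have sw: "sorted_wrt (<) (t # ts)" and lt: "last (t # ts) = 0"
      using ts unfolding is_partition_def by auto
    have intbound: "\<bar>integral {t..0} F\<bar> \<le> KF * (- t)" if "F integrable_on {t..0}" "\<And>s. s \<in> {t..0} \<Longrightarrow> \<bar>F s\<bar> \<le> KF" for F
    proof -
      have "norm (integral {t..0} F) \<le> integral {t..0} (\<lambda>_. KF)"
        by (rule integral_norm_bound_integral) (use that in auto)
      then show ?thesis using t by (simp add: mult.commute)
    qed
    have JB: "\<bar>J u d\<bar> \<le> KF + \<beta>0 / \<bar>t\<bar>" if u: "adm U t 0 u" and d: "adm D t 0 d" for u d
    proof -
      obtain Y0 where Y0: "norm Y0 \<le> R" and Jv: "J u d = (1 / \<bar>t\<bar>) * (integral {t..0} (\<lambda>s. lam \<bullet> Fmap f g M z (hat us u s) (hat ds d s)) + lam \<bullet> (M z *v (Y0 - y)))"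
        and ii: "(\<lambda>s. lam \<bullet> Fmap f g M z (hat us u s) (hat ds d s)) integrable_on {t..0}"
        using KJ[OF t u d us ds] unfolding J_def by blast
      have "\<bar>integral {t..0} (\<lambda>s. lam \<bullet> Fmap f g M z (hat us u s) (hat ds d s))\<bar> \<le> KF * (- t)"
        by (rule intbound[OF ii]) (use Fb hat_props(2)[OF t u us] hat_props(2)[OF t d ds] in auto)
      moreover have "\<bar>lam \<bullet> (M z *v (Y0 - y))\<bar> \<le> \<beta>0" by (rule Eb[OF Y0])
      ultimately have "\<bar>integral {t..0} (\<lambda>s. lam \<bullet> Fmap f g M z (hat us u s) (hat ds d s)) + lam \<bullet> (M z *v (Y0 - y))\<bar> \<le> KF * (- t) + \<beta>0"
        by linarith
      then have "\<bar>integral {t..0} (\<lambda>s. lam \<bullet> Fmap f g M z (hat us u s) (hat ds d s)) + lam \<bullet> (M z *v (Y0 - y))\<bar> / \<bar>t\<bar> \<le> (KF * (- t) + \<beta>0) / \<bar>t\<bar>"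
        by (rule divide_right_mono) simp
      moreover have "\<bar>J u d\<bar> = \<bar>integral {t..0} (\<lambda>s. lam \<bullet> Fmap f g M z (hat us u s) (hat ds d s)) + lam \<bullet> (M z *v (Y0 - y))\<bar> / \<bar>t\<bar>"
        unfolding Jv by (simp add: abs_mult)
      ultimately have "\<bar>J u d\<bar> \<le> (KF * (- t) + \<beta>0) / \<bar>t\<bar>" by simp
      also have "\<dots> = KF + \<beta>0 / \<bar>t\<bar>" using t by (simp add: field_simps)
      finally show ?thesis .
    qed
    have up: "Vplus U D f g A M z lam ts t y \<le> H + \<epsilon> + \<beta>0 / \<bar>t\<bar> \<and> Vminus U D f g A M z lam ts t y \<le> H + \<epsilon> + \<beta>0 / \<bar>t\<bar>"
      if \<epsilon>: "\<epsilon> > 0" for \<epsilon>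
    proof -
      have bddS: "bdd_above (\<phi> u ` D)" if "u \<in> U" for u using \<phi>b that by (intro bdd_aboveI[of _ KF]) force
      have bddI: "bdd_below ((\<lambda>u. SUP d\<in>D. \<phi> u d) ` U)"
      proof (rule bdd_belowI[of _ "-KF"])
        fix x assume "x \<in> (\<lambda>u. SUP d\<in>D. \<phi> u d) ` U"
        then obtain u where u: "u \<in> U" "x = (SUP d\<in>D. \<phi> u d)" by blast
        have "\<bar>SUP d\<in>D. \<phi> u d\<bar> \<le> KF" using \<phi>b u D by (intro abs_SUP_le) auto
        then show "- KF \<le> x" using u by linarith
      qed
      have "(INF u\<in>U. SUP d\<in>D. \<phi> u d) < H + \<epsilon>" using \<epsilon> Hdef by simp
      then obtain u1 where u1: "u1 \<in> U" and lt1: "(SUP d\<in>D. \<phi> u1 d) < H + \<epsilon>"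
        using cINF_less_iff[OF U(2) bddI] by blast
      have \<phi>u1: "\<phi> u1 d \<le> H + \<epsilon>" if "d \<in> D" for d
        using cSUP_upper[OF that bddS[OF u1]] lt1 by linarith
      have Jup: "J u d \<le> H + \<epsilon> + \<beta>0 / \<bar>t\<bar>"
        if u: "adm U t 0 u" and uc: "\<forall>s\<in>{t..<0}. u s = u1" and d: "adm D t 0 d" for u d
      proof -
        obtain Y0 where Y0: "norm Y0 \<le> R" and Jv: "J u d = (1 / \<bar>t\<bar>) * (integral {t..0} (\<lambda>s. lam \<bullet> Fmap f g M z (hat u1 u s) (hat ds d s)) + lam \<bullet> (M z *v (Y0 - y)))"
          and ii: "(\<lambda>s. lam \<bullet> Fmap f g M z (hat u1 u s) (hat ds d s)) integrable_on {t..0}"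
          using KJ[OF t u d u1 ds] unfolding J_def by blast
        have "integral {t..0} (\<lambda>s. lam \<bullet> Fmap f g M z (hat u1 u s) (hat ds d s)) \<le> integral {t..0} (\<lambda>_. H + \<epsilon>)"
        proof (rule integral_le[OF ii])
          fix s assume s: "s \<in> {t..0}"
          have "hat u1 u s = u1" using uc s by (auto simp: hat_def)
          then show "lam \<bullet> Fmap f g M z (hat u1 u s) (hat ds d s) \<le> H + \<epsilon>"
            using \<phi>u1[OF hat_props(2)[OF t d ds s]] by (simp add: \<phi>_def)
        qed auto
        also have "\<dots> = (H + \<epsilon>) * (- t)" using t by simp
        finally have I: "integral {t..0} (\<lambda>s. lam \<bullet> Fmap f g M z (hat u1 u s) (hat ds d s)) \<le> (H + \<epsilon>) * (- t)" .
        have E: "lam \<bullet> (M z *v (Y0 - y)) \<le> \<beta>0" using Eb[OF Y0] by linarith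
        have "J u d \<le> (1 / (- t)) * ((H + \<epsilon>) * (- t) + \<beta>0)"
          unfolding Jv at using I E t by (intro mult_left_mono) auto
        also have "\<dots> = H + \<epsilon> + \<beta>0 / \<bar>t\<bar>" using t by (simp add: field_simps)
        finally show ?thesis .
      qed
      have "vplus U D J t ts (\<lambda>_. undefined) (\<lambda>_. undefined) \<le> H + \<epsilon> + \<beta>0 / \<bar>t\<bar> \<and>
            vminus U D J t ts (\<lambda>_. undefined) (\<lambda>_. undefined) \<le> H + \<epsilon> + \<beta>0 / \<bar>t\<bar>"
        by (rule v_upper[OF U(2) D(2) JB u1 Jup sw lt]) (auto simp: adm_init)
      then show ?thesis by (simp add: Vplus_def Vminus_def J_def)
    qed
    have lo: "H - \<epsilon> - \<beta>0 / \<bar>t\<bar> \<le> Vplus U D f g A M z lam ts t y \<and> H - \<epsilon> - \<beta>0 / \<bar>t\<bar> \<le> Vminus U D f g A M z lam ts t y"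
      if \<epsilon>: "\<epsilon> > 0" for \<epsilon>
    proof -
      have bddI: "bdd_below ((\<lambda>u. \<phi> u d) ` U)" if "d \<in> D" for d using \<phi>b that by (intro bdd_belowI[of _ "-KF"]) force
      have bddS: "bdd_above ((\<lambda>d. INF u\<in>U. \<phi> u d) ` D)"
      proof (rule bdd_aboveI[of _ "KF"])
        fix x assume "x \<in> (\<lambda>d. INF u\<in>U. \<phi> u d) ` D"
        then obtain d where d: "d \<in> D" "x = (INF u\<in>U. \<phi> u d)" by blast
        have "\<bar>INF u\<in>U. \<phi> u d\<bar> \<le> KF" using \<phi>b d U by (intro abs_INF_le) auto
        then show "x \<le> KF" using d by linarith
      qed
      have "H - \<epsilon> < (SUP d\<in>D. INF u\<in>U. \<phi> u d)" using \<epsilon> Hdef2 by simp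
      then obtain d1 where d1: "d1 \<in> D" and lt1: "H - \<epsilon> < (INF u\<in>U. \<phi> u d1)"
        using less_cSUP_iff[OF D(2) bddS] by blast
      have \<phi>d1: "H - \<epsilon> \<le> \<phi> u d1" if "u \<in> U" for u
        using cINF_lower[OF bddI[OF d1] that] lt1 by linarith
      have Jlo: "H - \<epsilon> - \<beta>0 / \<bar>t\<bar> \<le> J u d"
        if u: "adm U t 0 u" and d: "adm D t 0 d" and dc: "\<forall>s\<in>{t..<0}. d s = d1" for u d
      proof -
        obtain Y0 where Y0: "norm Y0 \<le> R" and Jv: "J u d = (1 / \<bar>t\<bar>) * (integral {t..0} (\<lambda>s. lam \<bullet> Fmap f g M z (hat us u s) (hat d1 d s)) + lam \<bullet> (M z *v (Y0 - y)))"
          and ii: "(\<lambda>s. lam \<bullet> Fmap f g M z (hat us u s) (hat d1 d s)) integrable_on {t..0}"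
          using KJ[OF t u d us d1] unfolding J_def by blast
        have "integral {t..0} (\<lambda>_. H - \<epsilon>) \<le> integral {t..0} (\<lambda>s. lam \<bullet> Fmap f g M z (hat us u s) (hat d1 d s))"
        proof (rule integral_le[OF _ ii])
          fix s assume s: "s \<in> {t..0}"
          have "hat d1 d s = d1" using dc s by (auto simp: hat_def)
          then show "H - \<epsilon> \<le> lam \<bullet> Fmap f g M z (hat us u s) (hat d1 d s)"
            using \<phi>d1[OF hat_props(2)[OF t u us s]] by (simp add: \<phi>_def)
        qed auto
        moreover have "integral {t..0} (\<lambda>_. H - \<epsilon>) = (H - \<epsilon>) * (- t)" using t by simp
        ultimately have I: "(H - \<epsilon>) * (- t) \<le> integral {t..0} (\<lambda>s. lam \<bullet> Fmap f g M z (hat us u s) (hat d1 d s))" by simp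
        have E: "- \<beta>0 \<le> lam \<bullet> (M z *v (Y0 - y))" using Eb[OF Y0] by linarith
        have "H - \<epsilon> - \<beta>0 / \<bar>t\<bar> = (1 / (- t)) * ((H - \<epsilon>) * (- t) + (- \<beta>0))" using t by (simp add: field_simps)
        also have "\<dots> \<le> J u d"
          unfolding Jv at using I E t by (intro mult_left_mono) auto
        finally show ?thesis .
      qed
      have "H - \<epsilon> - \<beta>0 / \<bar>t\<bar> \<le> vplus U D J t ts (\<lambda>_. undefined) (\<lambda>_. undefined) \<and>
            H - \<epsilon> - \<beta>0 / \<bar>t\<bar> \<le> vminus U D J t ts (\<lambda>_. undefined) (\<lambda>_. undefined)"
        by (rule v_lower[OF U(2) D(2) JB d1 Jlo sw lt]) (auto simp: adm_init)
      then show ?thesis by (simp add: Vplus_def Vminus_def J_def)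
    qed
    have a1: "Vplus U D f g A M z lam ts t y \<le> H + \<beta>0 / \<bar>t\<bar>"
      by (rule field_le_epsilon) (use up in \<open>simp add: algebra_simps\<close>)
    have a2: "Vminus U D f g A M z lam ts t y \<le> H + \<beta>0 / \<bar>t\<bar>"
      by (rule field_le_epsilon) (use up in \<open>simp add: algebra_simps\<close>)
    have a3: "H - \<beta>0 / \<bar>t\<bar> \<le> Vplus U D f g A M z lam ts t y"
      by (rule field_le_epsilon) (use lo in \<open>force simp: algebra_simps\<close>)
    have a4: "H - \<beta>0 / \<bar>t\<bar> \<le> Vminus U D f g A M z lam ts t y"
      by (rule field_le_epsilon) (use lo in \<open>force simp: algebra_simps\<close>)
    show ?thesis using a1 a2 a3 a4 by (simp add: abs_le_iff)
  qed
  show ?thesis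
  proof (intro exI[of _ "\<beta>0 + 1"] conjI allI impI)
    show "0 < \<beta>0 + 1" using \<beta>0 by simp
    fix t :: real and ts assume t: "t < 0" and ts: "is_partition t ts"
    have "\<beta>0 / \<bar>t\<bar> \<le> (\<beta>0 + 1) / \<bar>t\<bar>" by (rule divide_right_mono) simp_all
    then show "\<bar>Vplus U D f g A M z lam ts t y - Ham U D f g M z lam\<bar> \<le> (\<beta>0 + 1) / \<bar>t\<bar>"
      "\<bar>Vminus U D f g A M z lam ts t y - Ham U D f g M z lam\<bar> \<le> (\<beta>0 + 1) / \<bar>t\<bar>"
      using main[OF t ts] by (auto simp: H_def)
  qed
qed

end


theorem mainTheorem3:
  fixes U :: "(real^'mu) set" and D :: "(real^'md) set"
    and f :: "real^'nz \<Rightarrow> real^'mu \<Rightarrow> real^'md \<Rightarrow> real^'nz"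
    and g :: "real^'nz \<Rightarrow> real^'mu \<Rightarrow> real^'md \<Rightarrow> real^'ny"
    and A :: "real^'nz \<Rightarrow> real^'mu \<Rightarrow> real^'md \<Rightarrow> real^'ny^'ny"
    and M :: "real^'nz \<Rightarrow> real^'ny^'nz"
    and y :: "real^'ny" and z :: "real^'nz" and lam :: "real^'nz"
  assumes "compact U" "U \<noteq> {}" "compact D" "D \<noteq> {}"
    and "continuous_on (UNIV \<times> U \<times> D) (\<lambda>(z, u, d). f z u d)"
    and "continuous_on (UNIV \<times> U \<times> D) (\<lambda>(z, u, d). g z u d)"
    and "continuous_on (UNIV \<times> U \<times> D) (\<lambda>(z, u, d). A z u d)"
    and "continuous_on UNIV M"
    and stab: "\<exists>P0. sym_posdef P0 \<and>
                 (\<forall>u\<in>U. \<forall>d\<in>D. negdef (transpose (A z u d) ** P0 + P0 ** A z u d))"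
    and saddle: "\<And>z' lam'. (INF u\<in>U. SUP d\<in>D. lam' \<bullet> Fmap f g M z' u d)
                          = (SUP d\<in>D. INF u\<in>U. lam' \<bullet> Fmap f g M z' u d)"
  shows "\<exists>\<beta>>0. \<forall>t<0. \<forall>ts. is_partition t ts \<longrightarrow>
           \<bar>Vplus U D f g A M z lam ts t y - Ham U D f g M z lam\<bar> \<le> \<beta> / \<bar>t\<bar> \<and>
           \<bar>Vminus U D f g A M z lam ts t y - Ham U D f g M z lam\<bar> \<le> \<beta> / \<bar>t\<bar>"
proof -
  have cf: "continuous_on (U \<times> D) (\<lambda>p. f z (fst p) (snd p))" by (rule cont_UD[OF assms(5)])
  have cg: "continuous_on (U \<times> D) (\<lambda>p. g z (fst p) (snd p))" by (rule cont_UD[OF assms(6)])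
  have cA: "continuous_on (U \<times> D) (\<lambda>p. A z (fst p) (snd p))" by (rule cont_UD[OF assms(7)])
  have cF: "continuous_on (U \<times> D) (\<lambda>p. lam \<bullet> Fmap f g M z (fst p) (snd p))"
    unfolding Fmap_def using cf cg by (intro continuous_intros) auto
  obtain Kg where Kg: "Kg \<ge> 0" and gb: "\<And>u d. u \<in> U \<Longrightarrow> d \<in> D \<Longrightarrow> norm (g z u d) \<le> Kg"
    using cont_bound_UD[OF assms(1,3) cg] by auto
  obtain KAm where KAm: "KAm \<ge> 0" and Amb: "\<And>u d. u \<in> U \<Longrightarrow> d \<in> D \<Longrightarrow> norm (A z u d) \<le> KAm"
    using cont_bound_UD[OF assms(1,3) cA] by auto
  obtain KF where KF: "KF \<ge> 0" and Fb0: "\<And>u d. u \<in> U \<Longrightarrow> d \<in> D \<Longrightarrow> norm (lam \<bullet> Fmap f g M z u d) \<le> KF"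
    using cont_bound_UD[OF assms(1,3) cF] by auto
  define KA where "KA = real CARD('ny) * real CARD('ny) * KAm"
  have KA: "KA \<ge> 0" unfolding KA_def using KAm by simp
  have Ab: "norm (A z u d *v x) \<le> KA * norm x" if "u \<in> U" "d \<in> D" for u d x
  proof -
    have "norm (A z u d *v x) \<le> real CARD('ny) * real CARD('ny) * norm (A z u d) * norm x" by (rule mv_bound)
    also have "\<dots> \<le> KA * norm x" unfolding KA_def using Amb[OF that]
      by (intro mult_right_mono mult_left_mono) auto
    finally show ?thesis .
  qed
  obtain P0 where P0: "sym_posdef P0" and nd: "\<And>u d. u \<in> U \<Longrightarrow> d \<in> D \<Longrightarrow> negdef (transpose (A z u d) ** P0 + P0 ** A z u d)"
    using stab by blast
  have tP: "transpose P0 = P0" and posd: "\<And>x. x \<noteq> 0 \<Longrightarrow> x \<bullet> (P0 *v x) > 0"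
    using P0 unfolding sym_posdef_def by auto
  have Psym: "\<And>x y. x \<bullet> (P0 *v y) = y \<bullet> (P0 *v x)" by (rule Psym_lemma[OF tP])
  have UD: "compact (U \<times> D)" "U \<times> D \<noteq> {}" using assms(1-4) by (auto intro: compact_Times)
  have "\<exists>c>0. \<forall>p\<in>U \<times> D. \<forall>x. x \<bullet> (P0 *v (A z (fst p) (snd p) *v x)) \<le> - c * (norm x)\<^sup>2"
  proof (rule quad_neg[OF UD])
    have "continuous_on ((U \<times> D) \<times> sphere 0 1) (\<lambda>q. A z (fst (fst q)) (snd (fst q)))"
      by (rule continuous_on_compose2[OF cA continuous_on_fst]) auto
    then show "continuous_on ((U \<times> D) \<times> sphere 0 1) (\<lambda>q. snd q \<bullet> (P0 *v (A z (fst (fst q)) (snd (fst q)) *v snd q)))"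
      by (intro continuous_intros) auto
    show "(r *\<^sub>R x) \<bullet> (P0 *v (A z (fst p) (snd p) *v (r *\<^sub>R x))) = r\<^sup>2 * (x \<bullet> (P0 *v (A z (fst p) (snd p) *v x)))" for p x r
      by (simp add: matrix_vector_mult_scaleR power2_eq_square)
    show "x \<bullet> (P0 *v (A z (fst p) (snd p) *v x)) < 0" if "p \<in> U \<times> D" "x \<noteq> 0" for p x
      using negdef_lemma[OF tP nd] that by (auto simp: mem_Times_iff)
  qed
  then obtain c where c: "c > 0" and diss0: "\<And>p x. p \<in> U \<times> D \<Longrightarrow> x \<bullet> (P0 *v (A z (fst p) (snd p) *v x)) \<le> - c * (norm x)\<^sup>2"
    by blast
  have diss: "x \<bullet> (P0 *v (A z u d *v x)) \<le> - c * (norm x)\<^sup>2" if "u \<in> U" "d \<in> D" for u d x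
    using diss0[of "(u, d)" x] that by simp
  have "\<exists>c>0. \<forall>p\<in>U \<times> D. \<forall>x. - (x \<bullet> (P0 *v x)) \<le> - c * (norm x)\<^sup>2"
  proof (rule quad_neg[OF UD])
    show "continuous_on ((U \<times> D) \<times> sphere 0 1) (\<lambda>q. - (snd q \<bullet> (P0 *v snd q)))"
      by (intro continuous_intros)
    show "- ((r *\<^sub>R x) \<bullet> (P0 *v (r *\<^sub>R x))) = r\<^sup>2 * - (x \<bullet> (P0 *v x))" for x r
      by (simp add: matrix_vector_mult_scaleR power2_eq_square)
    show "- (x \<bullet> (P0 *v x)) < 0" if "x \<noteq> 0" for x
      using posd[OF that] by simp
  qed
  then obtain m where m: "m > 0" and Pm0: "\<And>p x. p \<in> U \<times> D \<Longrightarrow> - (x \<bullet> (P0 *v x)) \<le> - m * (norm x)\<^sup>2"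
    by blast
  have Pm: "m * (norm x)\<^sup>2 \<le> x \<bullet> (P0 *v x)" for x
    using Pm0[of _ x] UD(2) by fastforce
  define pP where "pP = real CARD('ny) * real CARD('ny) * norm P0 + 1"
  have pP: "pP > 0" unfolding pP_def by (simp add: add_nonneg_pos)
  have Pb: "\<bar>x \<bullet> (P0 *v y)\<bar> \<le> pP * norm x * norm y" for x y
  proof -
    have "\<bar>x \<bullet> (P0 *v y)\<bar> \<le> norm x * norm (P0 *v y)" by (rule Cauchy_Schwarz_ineq2)
    also have "\<dots> \<le> norm x * (real CARD('ny) * real CARD('ny) * norm P0 * norm y)"
      by (intro mult_left_mono mv_bound) auto
    also have "\<dots> \<le> norm x * (pP * norm y)"
      unfolding pP_def by (intro mult_left_mono mult_right_mono) auto
    finally show ?thesis by (simp add: mult_ac)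
  qed
  interpret Loc: mainloc U D f g A M y z lam Kg KA KF P0 c pP m
    by unfold_locales (use assms(1-4) cf cg cA gb Kg Ab KA Fb0 Psym diss c Pb pP m Pm in auto)
  show ?thesis by (rule Loc.final[OF saddle])
qed


end
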